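(* There exist constants $c,\alpha,\beta>0$ such that for all sufficiently large $n$ and all $r\ge0$, $0<\epsilon\le 1$ and $R$ with $\epsilon<R$ and $c\sqrt{\log n}\le R\le\sqrt n$, with probability at least $1-1/n^2$ a graph drawn from the stationary distribution of the geometric-MEG $\mathcal{G}(n,r,R,\epsilon)$ is simultaneously an $(h,\alpha R^2/h)$-expander for every $1\le h\le\alpha R^2$ and an $(h,\beta R/\sqrt h)$-expander for every $\alpha R^2\le h\le n/2$.
   Context: $L_{n,\epsilon}=\{(i\epsilon,j\epsilon): i,j\in\mathbb{N},\ i,j\le\sqrt n/\epsilon\}$; $\Gamma(\mathbf{x})=\{\mathbf{y}\in L_{n,\epsilon}:d(\mathbf{x},\mathbf{y})\le r\}$ with $d$ Euclidean distance. Each node $i\in[n]$ has position $P_{i,t}\in L_{n,\epsilon}$ evolving independently as a Markov chain that moves from $\mathbf{x}$ to a uniform random point of $\Gamma(\mathbf{x})$. The geometric-MEG $\mathcal{G}(n,r,R,\epsilon)=\{G_t\}$ has $G_t=([n],E_t)$ with $E_t=\{\{i,j\}: d(P_{i,t},P_{j,t})\le R\}$. It is stationary when the initial positions are independent, each with the stationary law $\pi(\mathbf{x})=|\Gamma(\mathbf{x})|/\sum_{\mathbf{y}}|\Gamma(\mathbf{y})|$; the stationary distribution of $\mathcal{G}$ is the law of $G_0$ then. For $I\subseteq[n]$, $N(I)$ is the set of nodes outside $I$ adjacent to some node of $I$; a graph is an $(h,k)$-expander if every $I$ with $|I|\le h$ has $|N(I)|\ge k|I|$. *)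

theory Defs
  imports Complex_Main "HOL-Library.FuncSet"
begin

definition eucl_dist :: "real \<times> real \<Rightarrow> real \<times> real \<Rightarrow> real" where
  "eucl_dist x y = sqrt ((fst x - fst y)^2 + (snd x - snd y)^2)"

definition lattice :: "nat \<Rightarrow> real \<Rightarrow> (real \<times> real) set" where
  "lattice n \<epsilon> = {(real i * \<epsilon>, real j * \<epsilon>) | i j.
      real i \<le> sqrt (real n) / \<epsilon> \<and> real j \<le> sqrt (real n) / \<epsilon>}"

definition Gamma :: "nat \<Rightarrow> real \<Rightarrow> real \<Rightarrow> real \<times> real \<Rightarrow> (real \<times> real) set" where
  "Gamma n \<epsilon> r x = {y \<in> lattice n \<epsilon>. eucl_dist x y \<le> r}"

text \<open>Stationary law of a single node's position.\<close>
definition stat_pi :: "nat \<Rightarrow> real \<Rightarrow> real \<Rightarrow> real \<times> real \<Rightarrow> real" where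
  "stat_pi n \<epsilon> r x =
     real (card (Gamma n \<epsilon> r x)) / (\<Sum>y\<in>lattice n \<epsilon>. real (card (Gamma n \<epsilon> r y)))"

definition meg_adj :: "real \<Rightarrow> (nat \<Rightarrow> real \<times> real) \<Rightarrow> nat \<Rightarrow> nat \<Rightarrow> bool" where
  "meg_adj R P i j \<longleftrightarrow> i \<noteq> j \<and> eucl_dist (P i) (P j) \<le> R"

definition nbhd :: "nat \<Rightarrow> (nat \<Rightarrow> nat \<Rightarrow> bool) \<Rightarrow> nat set \<Rightarrow> nat set" where
  "nbhd n adj I = {j \<in> {0..<n} - I. \<exists>i\<in>I. adj i j}"

definition is_expander :: "nat \<Rightarrow> (nat \<Rightarrow> nat \<Rightarrow> bool) \<Rightarrow> nat \<Rightarrow> real \<Rightarrow> bool" where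
  "is_expander n adj h k \<longleftrightarrow>
     (\<forall>I. I \<subseteq> {0..<n} \<longrightarrow> card I \<le> h \<longrightarrow> real (card (nbhd n adj I)) \<ge> k * real (card I))"

text \<open>Probability, under the stationary distribution (independent positions with law stat_pi),
  that the snapshot graph G_0 satisfies property Q.\<close>
definition stationary_prob ::
  "nat \<Rightarrow> real \<Rightarrow> real \<Rightarrow> real \<Rightarrow> ((nat \<Rightarrow> nat \<Rightarrow> bool) \<Rightarrow> bool) \<Rightarrow> real" where
  "stationary_prob n r R \<epsilon> Q =
     (\<Sum>P\<in>{P \<in> PiE {0..<n} (\<lambda>_. lattice n \<epsilon>). Q (meg_adj R P)}.
        \<Prod>i\<in>{0..<n}. stat_pi n \<epsilon> r (P i))"

end

theory Submission
  imports Defs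
begin


lemma PiE_prod_power:
  fixes f :: "'a \<Rightarrow> real"
  assumes "finite S"
  shows "(\<Sum>P\<in>PiE {0..<n} (\<lambda>_. S). \<Prod>i\<in>{0..<n}. f (P i)) = (\<Sum>x\<in>S. f x)^n"
proof -
  have "(\<Prod>i\<in>{0..<n}. \<Sum>x\<in>S. f x) = (\<Sum>P\<in>PiE {0..<n} (\<lambda>_. S). \<Prod>i\<in>{0..<n}. f (P i))"
    by (rule prod_sum_PiE[where f="\<lambda>_ y. f y"]) (use assms in auto)
  then show ?thesis by simp
qed

lemma card_as_sum: "real (card {i\<in>A. Q i}) = (\<Sum>i\<in>A. if Q i then 1 else 0)" if "finite A"
proof -
  have "{i\<in>A. Q i} = A \<inter> Collect Q" by auto
  then show ?thesis using that by (simp add: sum.If_cases)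
qed

lemma exp_card: "finite A \<Longrightarrow> exp (s * real (card {i\<in>A. Q i})) = (\<Prod>i\<in>A. exp (if Q i then s else 0))"
  by (simp add: card_as_sum sum_distrib_left if_distrib exp_sum cong: if_cong)

lemma chernoff_low:
  fixes w :: "'a \<Rightarrow> real"
  assumes fin: "finite S" and nn: "\<And>x. x \<in> S \<Longrightarrow> w x \<ge> 0" and tot: "sum w S = 1"
    and p: "p = sum w {x\<in>S. x \<in> T}"
  shows "(\<Sum>P\<in>{P\<in>PiE {0..<n} (\<lambda>_. S). real (card {i\<in>{0..<n}. P i \<in> T}) \<le> a}.
            \<Prod>i\<in>{0..<n}. w (P i)) \<le> exp (a - real n * p / 2)"
proof -
  let ?X = "\<lambda>P. real (card {i\<in>{0..<n}. P i \<in> T})"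
  let ?A = "PiE {0..<n} (\<lambda>_. S)"
  have finA: "finite ?A" using fin by (simp add: finite_PiE)
  have wP: "\<And>P. P \<in> ?A \<Longrightarrow> (\<Prod>i\<in>{0..<n}. w (P i)) \<ge> 0"
    by (intro prod_nonneg) (auto simp: PiE_def Pi_def intro: nn)
  have "(\<Sum>P\<in>{P\<in>?A. ?X P \<le> a}. \<Prod>i\<in>{0..<n}. w (P i))
      \<le> (\<Sum>P\<in>{P\<in>?A. ?X P \<le> a}. (\<Prod>i\<in>{0..<n}. w (P i)) * exp (a - ?X P))"
  proof (intro sum_mono)
    fix P assume "P \<in> {P\<in>?A. ?X P \<le> a}"
    then have "1 \<le> exp (a - ?X P)" "P \<in> ?A" by auto
    then show "(\<Prod>i\<in>{0..<n}. w (P i)) \<le> (\<Prod>i\<in>{0..<n}. w (P i)) * exp (a - ?X P)"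
      using wP mult_left_mono[of 1 "exp (a - ?X P)"] by fastforce
  qed
  also have "\<dots> \<le> (\<Sum>P\<in>?A. (\<Prod>i\<in>{0..<n}. w (P i)) * exp (a - ?X P))"
    using wP finA by (intro sum_mono2) auto
  also have "\<dots> = exp a * (\<Sum>P\<in>?A. \<Prod>i\<in>{0..<n}. w (P i) * exp (if P i \<in> T then -1 else 0))"
  proof -
    have "\<And>P. exp (a - ?X P) = exp a * exp (- ?X P)" by (simp add: exp_diff exp_minus field_simps)
    moreover have "\<And>P. exp (- ?X P) = (\<Prod>i\<in>{0..<n}. exp (if P i \<in> T then -1 else 0))"
      using exp_card[of "{0..<n}" "-1"] by simp
    ultimately show ?thesis
      by (simp add: sum_distrib_left prod.distrib mult.assoc mult.left_commute)
  qed
  also have "\<dots> = exp a * (\<Sum>x\<in>S. w x * exp (if x \<in> T then -1 else 0))^n"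
    using PiE_prod_power[OF fin, of "\<lambda>x. w x * exp (if x \<in> T then -1 else 0)" n] by simp
  also have "(\<Sum>x\<in>S. w x * exp (if x \<in> T then -1 else 0)) = 1 - p * (1 - exp (-1))"
  proof -
    have "(\<Sum>x\<in>S. w x * exp (if x \<in> T then -1 else 0)) = (\<Sum>x\<in>S. w x - (if x \<in> T then w x * (1 - exp (-1)) else 0))"
      by (intro sum.cong) (auto simp: algebra_simps)
    also have "\<dots> = 1 - p * (1 - exp (-1))"
      using fin by (simp add: sum_subtractf tot p sum.If_cases sum_distrib_right Int_def conj_commute)
    finally show ?thesis .
  qed
  also have "1 - p * (1 - exp (-1)) \<le> exp (- p / 2)"
  proof -
    have e: "exp (-1::real) \<le> 1/2"
    proof -
      have "2 \<le> exp (1::real)" using exp_ge_add_one_self[of 1] by simp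
      then show ?thesis by (simp add: exp_minus field_simps)
    qed
    have p0: "p \<ge> 0" using p nn by (auto intro: sum_nonneg)
    have "1 - p * (1 - exp (-1)) \<le> 1 - p/2" using mult_left_mono[OF e p0] by (simp add: algebra_simps)
    also have "\<dots> \<le> exp (-p/2)" using exp_ge_add_one_self[of "-p/2"] by simp
    finally show ?thesis .
  qed
  hence "exp a * (1 - p * (1 - exp (-1)))^n \<le> exp a * (exp (- p/2))^n"
  proof -
    have p1: "p \<le> 1" unfolding p tot[symmetric] using fin nn by (intro sum_mono2) auto
    have p0: "p \<ge> 0" using p nn by (auto intro: sum_nonneg)
    have "p * (1 - exp (-1)) \<le> 1" using p1 p0 by (intro mult_le_one) auto
    then have "0 \<le> 1 - p * (1 - exp (-1))" by simp
    then show ?thesis using \<open>1 - p * (1 - exp (-1)) \<le> exp (- p / 2)\<close> by (intro mult_left_mono power_mono) auto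
  qed
  also have "exp a * (exp (- p/2))^n = exp (a - real n * p / 2)"
    by (simp add: exp_of_nat_mult[symmetric] exp_add[symmetric])
  finally show ?thesis by simp
qed

lemma chernoff_high:
  fixes w :: "'a \<Rightarrow> real"
  assumes fin: "finite S" and nn: "\<And>x. x \<in> S \<Longrightarrow> w x \<ge> 0" and tot: "sum w S = 1"
    and p: "p = sum w {x\<in>S. x \<in> T}"
  shows "(\<Sum>P\<in>{P\<in>PiE {0..<n} (\<lambda>_. S). real (card {i\<in>{0..<n}. P i \<in> T}) \<ge> a}.
            \<Prod>i\<in>{0..<n}. w (P i)) \<le> exp (2 * real n * p - a)"
proof -
  let ?X = "\<lambda>P. real (card {i\<in>{0..<n}. P i \<in> T})"
  let ?A = "PiE {0..<n} (\<lambda>_. S)"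
  have finA: "finite ?A" using fin by (simp add: finite_PiE)
  have wP: "\<And>P. P \<in> ?A \<Longrightarrow> (\<Prod>i\<in>{0..<n}. w (P i)) \<ge> 0"
    by (intro prod_nonneg) (auto simp: PiE_def Pi_def intro: nn)
  have "(\<Sum>P\<in>{P\<in>?A. ?X P \<ge> a}. \<Prod>i\<in>{0..<n}. w (P i))
      \<le> (\<Sum>P\<in>{P\<in>?A. ?X P \<ge> a}. (\<Prod>i\<in>{0..<n}. w (P i)) * exp (?X P - a))"
  proof (intro sum_mono)
    fix P assume "P \<in> {P\<in>?A. ?X P \<ge> a}"
    then have "1 \<le> exp (?X P - a)" "P \<in> ?A" by auto
    then show "(\<Prod>i\<in>{0..<n}. w (P i)) \<le> (\<Prod>i\<in>{0..<n}. w (P i)) * exp (?X P - a)"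
      using wP mult_left_mono[of 1 "exp (?X P - a)"] by fastforce
  qed
  also have "\<dots> \<le> (\<Sum>P\<in>?A. (\<Prod>i\<in>{0..<n}. w (P i)) * exp (?X P - a))"
    using wP finA by (intro sum_mono2) auto
  also have "\<dots> = exp (-a) * (\<Sum>P\<in>?A. \<Prod>i\<in>{0..<n}. w (P i) * exp (if P i \<in> T then 1 else 0))"
  proof -
    have "\<And>P. exp (?X P - a) = exp (-a) * exp (?X P)" by (simp add: exp_diff exp_minus field_simps)
    moreover have "\<And>P. exp (?X P) = (\<Prod>i\<in>{0..<n}. exp (if P i \<in> T then 1 else 0))"
      using exp_card[of "{0..<n}" "1"] by simp
    ultimately show ?thesis
      by (simp add: sum_distrib_left prod.distrib mult.assoc mult.left_commute)
  qed
  also have "\<dots> = exp (-a) * (\<Sum>x\<in>S. w x * exp (if x \<in> T then 1 else 0))^n"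
    using PiE_prod_power[OF fin, of "\<lambda>x. w x * exp (if x \<in> T then 1 else 0)" n] by simp
  also have "(\<Sum>x\<in>S. w x * exp (if x \<in> T then 1 else 0)) = 1 + p * (exp 1 - 1)"
  proof -
    have "(\<Sum>x\<in>S. w x * exp (if x \<in> T then 1 else 0)) = (\<Sum>x\<in>S. w x + (if x \<in> T then w x * (exp 1 - 1) else 0))"
      by (intro sum.cong) (auto simp: algebra_simps)
    also have "\<dots> = 1 + p * (exp 1 - 1)"
      using fin by (simp add: sum.distrib tot p sum.If_cases sum_distrib_right Int_def conj_commute)
    finally show ?thesis .
  qed
  also have "exp (-a) * (1 + p * (exp 1 - 1))^n \<le> exp (-a) * (exp (2 * p))^n"
  proof -
    have e: "exp 1 - 1 \<le> (2::real)" using exp_le by simp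
    have p0: "p \<ge> 0" using p nn by (auto intro: sum_nonneg)
    have e1: "exp 1 - 1 \<ge> (0::real)" by simp
    have "1 + p * (exp 1 - 1) \<le> 1 + 2 * p" using mult_left_mono[OF e p0] by (simp add: algebra_simps)
    also have "\<dots> \<le> exp (2 * p)" using exp_ge_add_one_self[of "2*p"] by simp
    finally have "1 + p * (exp 1 - 1) \<le> exp (2 * p)" .
    moreover have "0 \<le> 1 + p * (exp 1 - 1)" using p0 e1 by simp
    ultimately show ?thesis by (intro mult_left_mono power_mono) auto
  qed
  also have "exp (-a) * (exp (2 * p))^n = exp (2 * real n * p - a)"
    by (simp add: exp_of_nat_mult[symmetric] exp_add[symmetric])
  finally show ?thesis by simp
qed


definition adj4 :: "nat \<times> nat \<Rightarrow> nat \<times> nat \<Rightarrow> bool" where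
  "adj4 x y \<longleftrightarrow> (fst x = fst y \<and> (snd x = snd y + 1 \<or> snd y = snd x + 1)) \<or>
                 (snd x = snd y \<and> (fst x = fst y + 1 \<or> fst y = fst x + 1))"

definition bdry :: "nat \<Rightarrow> (nat \<times> nat) set \<Rightarrow> (nat \<times> nat) set" where
  "bdry U H = {d \<in> {0..<U} \<times> {0..<U} - H. \<exists>c\<in>H. adj4 c d}"

lemma discrete_ivt:
  fixes Q :: "nat \<Rightarrow> bool"
  assumes "a < U" "b < U" "Q a" "\<not> Q b"
  shows "\<exists>j. j + 1 < U \<and> Q j \<noteq> Q (j + 1)"
proof (rule ccontr)
  assume "\<not> ?thesis"
  then have h: "\<And>j. j + 1 < U \<Longrightarrow> Q j = Q (j+1)" by blast
  have "\<And>k. k < U \<Longrightarrow> Q k = Q 0"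
  proof -
    fix k show "k < U \<Longrightarrow> Q k = Q 0"
      by (induction k) (use h in auto)
  qed
  then show False using assms by metis
qed

lemma row_bdry:
  assumes "i < U" "j1 < U" "j2 < U" "(i, j1) \<in> H" "(i, j2) \<notin> H"
  shows "\<exists>j. (i, j) \<in> bdry U H"
proof -
  obtain j where j: "j + 1 < U" "((i,j) \<in> H) \<noteq> ((i, j+1) \<in> H)"
    using discrete_ivt[of j1 U j2 "\<lambda>j. (i,j) \<in> H"] assms by auto
  show ?thesis
  proof (cases "(i,j) \<in> H")
    case True
    then have "(i, j+1) \<in> bdry U H" using j assms(1) unfolding bdry_def adj4_def by (auto intro!: bexI[of _ "(i, j)"])
    then show ?thesis by blast
  next
    case False
    then have "(i, j) \<in> bdry U H" using j assms(1) unfolding bdry_def adj4_def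
      by (auto intro!: bexI[of _ "(i, j+1)"])
    then show ?thesis by blast
  qed
qed

lemma col_bdry:
  assumes "j < U" "i1 < U" "i2 < U" "(i1, j) \<in> H" "(i2, j) \<notin> H"
  shows "\<exists>i. (i, j) \<in> bdry U H"
proof -
  obtain i where i: "i + 1 < U" "((i,j) \<in> H) \<noteq> ((i+1, j) \<in> H)"
    using discrete_ivt[of i1 U i2 "\<lambda>i. (i,j) \<in> H"] assms by auto
  show ?thesis
  proof (cases "(i,j) \<in> H")
    case True
    then have "(i+1, j) \<in> bdry U H" using i assms(1) unfolding bdry_def adj4_def by (auto intro!: bexI[of _ "(i, j)"])
    then show ?thesis by blast
  next
    case False
    then have "(i, j) \<in> bdry U H" using i assms(1) unfolding bdry_def adj4_def
      by (auto intro!: bexI[of _ "(i+1, j)"])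
    then show ?thesis by blast
  qed
qed

lemma card_rows_le:
  assumes "\<And>i. i \<in> A \<Longrightarrow> \<exists>j. (i, j) \<in> bdry U H"
  shows "card A \<le> card (bdry U H)"
proof -
  define f where "f i = (i, SOME j. (i, j) \<in> bdry U H)" for i
  have "inj_on f A" unfolding f_def inj_on_def by auto
  moreover have "f ` A \<subseteq> bdry U H" unfolding f_def using assms by (auto intro: someI_ex)
  moreover have "finite (bdry U H)" unfolding bdry_def by (rule finite_subset[of _ "{0..<U} \<times> {0..<U}"]) auto
  ultimately show ?thesis by (intro card_inj_on_le) auto
qed

lemma card_cols_le:
  assumes "\<And>j. j \<in> A \<Longrightarrow> \<exists>i. (i, j) \<in> bdry U H"
  shows "card A \<le> card (bdry U H)"
proof -
  define f where "f j = (SOME i. (i, j) \<in> bdry U H, j)" for j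
  have "inj_on f A" unfolding f_def inj_on_def by auto
  moreover have "f ` A \<subseteq> bdry U H" unfolding f_def using assms by (auto intro: someI_ex)
  moreover have "finite (bdry U H)" unfolding bdry_def by (rule finite_subset[of _ "{0..<U} \<times> {0..<U}"]) auto
  ultimately show ?thesis by (intro card_inj_on_le) auto
qed

lemma grid_iso:
  assumes HG: "H \<subseteq> {0..<U} \<times> {0..<U}"
  shows "min (card H) (card ({0..<U} \<times> {0..<U} - H)) \<le> (card (bdry U H))^2"
proof -
  let ?G = "{0..<U} \<times> {0..<U}"
  let ?b = "card (bdry U H)"
  define RH where "RH = {i. i < U \<and> (\<exists>j<U. (i,j) \<in> H)}"
  define CH where "CH = {j. j < U \<and> (\<exists>i<U. (i,j) \<in> H)}"
  define RC where "RC = {i. i < U \<and> (\<exists>j<U. (i,j) \<notin> H)}"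
  define CC where "CC = {j. j < U \<and> (\<exists>i<U. (i,j) \<notin> H)}"
  have PR: "card (RH \<inter> RC) \<le> ?b"
    by (rule card_rows_le) (auto simp: RH_def RC_def intro: row_bdry)
  have PC: "card (CH \<inter> CC) \<le> ?b"
    by (rule card_cols_le) (auto simp: CH_def CC_def intro: col_bdry)
  have H1: "card H \<le> card RH * card CH"
  proof -
    have "H \<subseteq> RH \<times> CH"
    proof
      fix x assume "x \<in> H"
      moreover obtain a b where "x = (a,b)" by force
      ultimately have "(a,b) \<in> H" "a < U" "b < U" using HG by auto
      then show "x \<in> RH \<times> CH" using \<open>x = (a,b)\<close> by (auto simp: RH_def CH_def)
    qed
    then have "card H \<le> card (RH \<times> CH)" by (rule card_mono[rotated]) (auto simp: RH_def CH_def)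
    then show ?thesis by (simp add: card_cartesian_product)
  qed
  have H2: "card (?G - H) \<le> card RC * card CC"
  proof -
    have "?G - H \<subseteq> RC \<times> CC" by (auto simp: RC_def CC_def)
    then have "card (?G - H) \<le> card (RC \<times> CC)" by (rule card_mono[rotated]) (auto simp: RC_def CC_def)
    then show ?thesis by (simp add: card_cartesian_product)
  qed
  have sq: "x * y \<le> b^2" if "x \<le> b" "y \<le> b" for x y b :: nat
    using mult_le_mono[OF that] by (simp add: power2_eq_square)
  have cardH: "card H \<le> U * U"
  proof -
    have "card H \<le> card ?G" using HG by (intro card_mono) auto
    then show ?thesis by simp
  qed
  consider "RH \<subseteq> RC \<and> CH \<subseteq> CC" | "RC \<subseteq> RH \<and> CC \<subseteq> CH"
    | "{0..<U} \<subseteq> CH \<inter> CC" | "{0..<U} \<subseteq> RH \<inter> RC"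
  proof -
    assume c1: "RH \<subseteq> RC \<and> CH \<subseteq> CC \<Longrightarrow> thesis" and c2: "RC \<subseteq> RH \<and> CC \<subseteq> CH \<Longrightarrow> thesis"
      and c3: "{0..<U} \<subseteq> CH \<inter> CC \<Longrightarrow> thesis" and c4: "{0..<U} \<subseteq> RH \<inter> RC \<Longrightarrow> thesis"
    show thesis
    proof (cases "\<exists>i<U. \<forall>j<U. (i,j) \<in> H")
      case FR: True
      then have allCH: "{0..<U} \<subseteq> CH" by (auto simp: CH_def)
      show ?thesis
      proof (cases "\<exists>i<U. \<forall>j<U. (i,j) \<notin> H")
        case True
        then have "{0..<U} \<subseteq> CC" by (auto simp: CC_def)
        then show ?thesis using allCH c3 by blast
      next
        case False
        then have "RC \<subseteq> RH" by (auto simp: RC_def RH_def)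
        moreover have "CC \<subseteq> CH" using allCH by (auto simp: CC_def)
        ultimately show ?thesis using c2 by blast
      qed
    next
      case nFR: False
      then have RHC: "RH \<subseteq> RC" by (auto simp: RC_def RH_def)
      show ?thesis
      proof (cases "\<exists>j<U. \<forall>i<U. (i,j) \<in> H")
        case FC: True
        then have allRH: "{0..<U} \<subseteq> RH" by (auto simp: RH_def)
        show ?thesis
        proof (cases "\<exists>j<U. \<forall>i<U. (i,j) \<notin> H")
          case True
          then have "{0..<U} \<subseteq> RC" by (auto simp: RC_def)
          then show ?thesis using allRH c4 by blast
        next
          case False
          then have "CC \<subseteq> CH" by (auto simp: CC_def CH_def)
          moreover have "RC \<subseteq> RH" using allRH by (auto simp: RC_def)
          ultimately show ?thesis using c2 by blast
        qed
      next
        case False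
        then have "CH \<subseteq> CC" by (auto simp: CC_def CH_def)
        then show ?thesis using RHC c1 by blast
      qed
    qed
  qed
  then show ?thesis
  proof cases
    case 1
    then have "RH \<inter> RC = RH" "CH \<inter> CC = CH" by auto
    then have "card H \<le> ?b^2" using H1 PR PC sq by (metis order_trans)
    then show ?thesis by simp
  next
    case 2
    then have "RH \<inter> RC = RC" "CH \<inter> CC = CC" by auto
    then have "card (?G - H) \<le> ?b^2" using H2 PR PC sq by (metis order_trans)
    then show ?thesis by simp
  next
    case 3
    then have "U \<le> card (CH \<inter> CC)" using card_mono[of "CH \<inter> CC" "{0..<U}"] by (auto simp: CH_def)
    then have "U \<le> ?b" using PC by simp
    then have "card H \<le> ?b^2" using cardH sq[of U ?b U] by simp
    then show ?thesis by simp
  next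
    case 4
    then have "U \<le> card (RH \<inter> RC)" using card_mono[of "RH \<inter> RC" "{0..<U}"] by (auto simp: RH_def)
    then have "U \<le> ?b" using PR by simp
    then have "card H \<le> ?b^2" using cardH sq[of U ?b U] by simp
    then show ?thesis by simp
  qed
qed


lemma card_fiber_le:
  assumes finA: "finite A" and finB: "finite B" and fAB: "\<And>a. a \<in> A \<Longrightarrow> f a \<in> B"
    and fib: "\<And>b. b \<in> B \<Longrightarrow> card {a\<in>A. f a = b} \<le> k"
  shows "card A \<le> k * card B"
proof -
  have "A = (\<Union>b\<in>B. {a\<in>A. f a = b})" using fAB by auto
  then have "card A \<le> (\<Sum>b\<in>B. card {a\<in>A. f a = b})" using card_UN_le[OF finB] by metis
  also have "\<dots> \<le> (\<Sum>b\<in>B. k)" using fib by (intro sum_mono) auto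
  finally show ?thesis by (simp add: mult.commute)
qed

definition Dset :: "nat \<Rightarrow> (real \<Rightarrow> real \<Rightarrow> bool) \<Rightarrow> nat \<times> nat \<Rightarrow> (nat \<times> nat) set" where
  "Dset N K i = {(a,b) \<in> {0..N} \<times> {0..N}. K (real (fst i) - real a) (real (snd i) - real b)}"

definition dclosed :: "(real \<Rightarrow> real \<Rightarrow> bool) \<Rightarrow> bool" where
  "dclosed K \<longleftrightarrow> (\<forall>s t s' t'. K s t \<and> \<bar>s'\<bar> \<le> \<bar>s\<bar> \<and> \<bar>t'\<bar> \<le> \<bar>t\<bar> \<longrightarrow> K s' t')"

lemma dclosedD: "dclosed K \<Longrightarrow> K s t \<Longrightarrow> \<bar>s'\<bar> \<le> \<bar>s\<bar> \<Longrightarrow> \<bar>t'\<bar> \<le> \<bar>t\<bar> \<Longrightarrow> K s' t'"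
  unfolding dclosed_def by blast

definition ndist :: "nat \<Rightarrow> nat \<Rightarrow> nat" where "ndist a y = (if y \<le> a then a - y else y - a)"

lemma ndist_real: "real (ndist a y) = \<bar>real y - real a\<bar>" by (auto simp: ndist_def)

lemma card_two: "card {x. x = u \<or> x = v} \<le> 2"
proof -
  have "{x. x = u \<or> x = v} = {u, v}" by auto
  then show ?thesis by (simp add: card_insert_le_m1)
qed

lemma step2:
  assumes K: "dclosed K" and y: "fst y \<le> N" "snd y \<le> N"
  shows "card (Dset N K y) \<le> 4 * card {(a,b) \<in> {0..N} \<times> {0..N}. K (real a) (real b)}"
proof (rule card_fiber_le[where f="\<lambda>(a,b). (ndist a (fst y), ndist b (snd y))"])
  show "finite (Dset N K y)" unfolding Dset_def by (rule finite_subset[of _ "{0..N} \<times> {0..N}"]) auto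
  show "finite {(a,b) \<in> {0..N} \<times> {0..N}. K (real a) (real b)}" by (rule finite_subset[of _ "{0..N} \<times> {0..N}"]) auto
next
  fix x assume "x \<in> Dset N K y"
  then obtain a b where x: "x = (a,b)" "a \<le> N" "b \<le> N" "K (real (fst y) - real a) (real (snd y) - real b)"
    unfolding Dset_def by auto
  have "K (real (ndist a (fst y))) (real (ndist b (snd y)))"
    by (rule dclosedD[OF K x(4)]) (simp_all add: ndist_real)
  moreover have "ndist a (fst y) \<le> N" "ndist b (snd y) \<le> N" using x y by (auto simp: ndist_def)
  ultimately show "(\<lambda>(a,b). (ndist a (fst y), ndist b (snd y))) x \<in> {(a,b) \<in> {0..N} \<times> {0..N}. K (real a) (real b)}"
    using x by auto
next
  fix z assume "z \<in> {(a,b) \<in> {0..N} \<times> {0..N}. K (real a) (real b)}"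
  obtain u v where z: "z = (u,v)" by force
  have "{x \<in> Dset N K y. (\<lambda>(a,b). (ndist a (fst y), ndist b (snd y))) x = z}
        \<subseteq> {a. a = fst y + u \<or> a = fst y - u} \<times> {b. b = snd y + v \<or> b = snd y - v}"
    using z by (auto simp: ndist_def split: if_splits)
  then have "card {x \<in> Dset N K y. (\<lambda>(a,b). (ndist a (fst y), ndist b (snd y))) x = z}
        \<le> card ({a. a = fst y + u \<or> a = fst y - u} \<times> {b. b = snd y + v \<or> b = snd y - v})"
    by (intro card_mono) auto
  also have "\<dots> \<le> 2 * 2" unfolding card_cartesian_product by (intro mult_le_mono card_two)
  finally show "card {x \<in> Dset N K y. (\<lambda>(a,b). (ndist a (fst y), ndist b (snd y))) x = z} \<le> 4" by simp
qed

lemma step3: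
  assumes K: "dclosed K"
  shows "card {(a,b) \<in> {0..N} \<times> {0..N}. K (real a) (real b)}
       \<le> 4 * card {(a,b) \<in> {0..N div 2} \<times> {0..N div 2}. K (real a) (real b)}"
proof (rule card_fiber_le[where f="\<lambda>(a,b). (a div 2, b div 2)"])
  show "finite {(a,b) \<in> {0..N} \<times> {0..N}. K (real a) (real b)}" by (rule finite_subset[of _ "{0..N} \<times> {0..N}"]) auto
  show "finite {(a,b) \<in> {0..N div 2} \<times> {0..N div 2}. K (real a) (real b)}" by (rule finite_subset[of _ "{0..N div 2} \<times> {0..N div 2}"]) auto
next
  fix x assume "x \<in> {(a,b) \<in> {0..N} \<times> {0..N}. K (real a) (real b)}"
  then obtain a b where x: "x = (a,b)" "a \<le> N" "b \<le> N" "K (real a) (real b)" by auto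
  have "real (a div 2) \<le> real a" "real (b div 2) \<le> real b" by auto
  then have "K (real (a div 2)) (real (b div 2))" by (intro dclosedD[OF K x(4)]) auto
  moreover have "a div 2 \<le> N div 2" "b div 2 \<le> N div 2" using x by (auto intro: div_le_mono)
  ultimately show "(\<lambda>(a,b). (a div 2, b div 2)) x \<in> {(a,b) \<in> {0..N div 2} \<times> {0..N div 2}. K (real a) (real b)}"
    using x by auto
next
  fix z assume "z \<in> {(a,b) \<in> {0..N div 2} \<times> {0..N div 2}. K (real a) (real b)}"
  obtain u v where z: "z = (u,v)" by force
  have "{x \<in> {(a,b) \<in> {0..N} \<times> {0..N}. K (real a) (real b)}. (\<lambda>(a,b). (a div 2, b div 2)) x = z}
        \<subseteq> {a. a = 2*u \<or> a = 2*u+1} \<times> {b. b = 2*v \<or> b = 2*v+1}"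
    using z by auto
  then have "card {x \<in> {(a,b) \<in> {0..N} \<times> {0..N}. K (real a) (real b)}. (\<lambda>(a,b). (a div 2, b div 2)) x = z}
        \<le> card ({a. a = 2*u \<or> a = 2*u+1} \<times> {b. b = 2*v \<or> b = 2*v+1})"
    by (intro card_mono) auto
  also have "\<dots> \<le> 2 * 2" unfolding card_cartesian_product by (intro mult_le_mono card_two)
  finally show "card {x \<in> {(a,b) \<in> {0..N} \<times> {0..N}. K (real a) (real b)}. (\<lambda>(a,b). (a div 2, b div 2)) x = z} \<le> 4" by simp
qed

definition shiftc :: "nat \<Rightarrow> nat \<Rightarrow> nat \<Rightarrow> nat" where
  "shiftc N i a = (if i + N div 2 \<le> N then i + a else i - a)"

lemma shiftc_ok:
  assumes "i \<le> N" "a \<le> N div 2"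
  shows "shiftc N i a \<le> N" "\<bar>real i - real (shiftc N i a)\<bar> = real a"
proof -
  have "N div 2 \<le> N - N div 2" by simp
  then show "shiftc N i a \<le> N" "\<bar>real i - real (shiftc N i a)\<bar> = real a"
    using assms by (auto simp: shiftc_def of_nat_diff)
qed

lemma shiftc_inj: "i \<le> N \<Longrightarrow> inj_on (shiftc N i) {0..N div 2}"
  unfolding inj_on_def shiftc_def by auto

lemma step1:
  assumes K: "dclosed K" and x: "fst x \<le> N" "snd x \<le> N"
  shows "card {(a,b) \<in> {0..N div 2} \<times> {0..N div 2}. K (real a) (real b)} \<le> card (Dset N K x)"
proof (rule card_inj_on_le[where f="\<lambda>(a,b). (shiftc N (fst x) a, shiftc N (snd x) b)"])
  show "inj_on (\<lambda>(a,b). (shiftc N (fst x) a, shiftc N (snd x) b)) {(a,b) \<in> {0..N div 2} \<times> {0..N div 2}. K (real a) (real b)}"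
    using shiftc_inj[OF x(1)] shiftc_inj[OF x(2)] unfolding inj_on_def by auto
  show "finite (Dset N K x)" unfolding Dset_def by (rule finite_subset[of _ "{0..N} \<times> {0..N}"]) auto
  show "(\<lambda>(a,b). (shiftc N (fst x) a, shiftc N (snd x) b)) ` {(a,b) \<in> {0..N div 2} \<times> {0..N div 2}. K (real a) (real b)} \<subseteq> Dset N K x"
  proof clarify
    fix a b assume ab: "a \<in> {0..N div 2}" "b \<in> {0..N div 2}" "K (real a) (real b)"
    have "K (real (fst x) - real (shiftc N (fst x) a)) (real (snd x) - real (shiftc N (snd x) b))"
      by (rule dclosedD[OF K ab(3)]) (use ab shiftc_ok[OF x(1), of a] shiftc_ok[OF x(2), of b] in auto)
    then show "(shiftc N (fst x) a, shiftc N (snd x) b) \<in> Dset N K x"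
      using ab shiftc_ok[OF x(1), of a] shiftc_ok[OF x(2), of b] unfolding Dset_def by auto
  qed
qed

lemma Dset_ratio:
  assumes K: "dclosed K" and x: "fst x \<le> N" "snd x \<le> N" and y: "fst y \<le> N" "snd y \<le> N"
  shows "card (Dset N K y) \<le> 16 * card (Dset N K x)"
  using step2[OF K y] step3[OF K, of N] step1[OF K x] by linarith


definition iota :: "real \<Rightarrow> nat \<times> nat \<Rightarrow> real \<times> real" where
  "iota \<epsilon> x = (real (fst x) * \<epsilon>, real (snd x) * \<epsilon>)"

definition Kf :: "real \<Rightarrow> real \<Rightarrow> real \<Rightarrow> real \<Rightarrow> bool" where
  "Kf \<epsilon> r s t \<longleftrightarrow> sqrt ((s * \<epsilon>)^2 + (t * \<epsilon>)^2) \<le> r"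

lemma nat_floor_iff: "a \<ge> 0 \<Longrightarrow> i \<le> nat \<lfloor>a\<rfloor> \<longleftrightarrow> real i \<le> a"
  by (simp add: le_nat_iff le_floor_iff)

lemma iota_inj: "\<epsilon> > 0 \<Longrightarrow> inj_on (iota \<epsilon>) A"
  unfolding inj_on_def iota_def by (auto simp: prod_eq_iff)

lemma lattice_eq:
  assumes "\<epsilon> > 0"
  shows "lattice n \<epsilon> = iota \<epsilon> ` ({0..nat \<lfloor>sqrt (real n) / \<epsilon>\<rfloor>} \<times> {0..nat \<lfloor>sqrt (real n) / \<epsilon>\<rfloor>})"
proof -
  have a: "sqrt (real n) / \<epsilon> \<ge> 0" using assms by simp
  let ?N = "nat \<lfloor>sqrt (real n) / \<epsilon>\<rfloor>"
  have "lattice n \<epsilon> = {(real i * \<epsilon>, real j * \<epsilon>) | i j. i \<le> ?N \<and> j \<le> ?N}"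
    unfolding lattice_def using nat_floor_iff[OF a] by simp
  also have "\<dots> = iota \<epsilon> ` ({0..?N} \<times> {0..?N})"
  proof (intro set_eqI iffI)
    fix z assume "z \<in> {(real i * \<epsilon>, real j * \<epsilon>) | i j. i \<le> ?N \<and> j \<le> ?N}"
    then obtain i j where "z = (real i * \<epsilon>, real j * \<epsilon>)" "i \<le> ?N" "j \<le> ?N" by blast
    then show "z \<in> iota \<epsilon> ` ({0..?N} \<times> {0..?N})" unfolding iota_def by (intro image_eqI[of _ _ "(i,j)"]) auto
  next
    fix z assume "z \<in> iota \<epsilon> ` ({0..?N} \<times> {0..?N})"
    then obtain i j where "z = iota \<epsilon> (i,j)" "i \<le> ?N" "j \<le> ?N" by auto
    then show "z \<in> {(real i * \<epsilon>, real j * \<epsilon>) | i j. i \<le> ?N \<and> j \<le> ?N}" unfolding iota_def by auto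
  qed
  finally show ?thesis .
qed

lemma card_lattice:
  assumes "\<epsilon> > 0"
  shows "card (lattice n \<epsilon>) = (nat \<lfloor>sqrt (real n) / \<epsilon>\<rfloor> + 1)^2"
  unfolding lattice_eq[OF assms]
  by (subst card_image) (auto simp: iota_inj[OF assms] card_cartesian_product power2_eq_square)

lemma finite_lattice: "\<epsilon> > 0 \<Longrightarrow> finite (lattice n \<epsilon>)"
  unfolding lattice_eq by auto

lemma dclosed_Kf: "dclosed (Kf \<epsilon> r)"
  unfolding dclosed_def Kf_def
proof (intro allI impI, elim conjE)
  fix s t s' t' :: real
  assume h: "sqrt ((s * \<epsilon>)\<^sup>2 + (t * \<epsilon>)\<^sup>2) \<le> r" "\<bar>s'\<bar> \<le> \<bar>s\<bar>" "\<bar>t'\<bar> \<le> \<bar>t\<bar>"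
  have "s'^2 \<le> s^2" "t'^2 \<le> t^2" using h(2,3) by (simp_all add: abs_le_square_iff)
  then have "(s' * \<epsilon>)\<^sup>2 + (t' * \<epsilon>)\<^sup>2 \<le> (s * \<epsilon>)\<^sup>2 + (t * \<epsilon>)\<^sup>2"
    by (simp add: power_mult_distrib add_mono mult_right_mono)
  then show "sqrt ((s' * \<epsilon>)\<^sup>2 + (t' * \<epsilon>)\<^sup>2) \<le> r" using h(1) real_sqrt_le_mono order_trans by blast
qed

lemma Gamma_eq:
  assumes e: "\<epsilon> > 0" and x: "x \<in> {0..nat \<lfloor>sqrt (real n) / \<epsilon>\<rfloor>} \<times> {0..nat \<lfloor>sqrt (real n) / \<epsilon>\<rfloor>}"
  shows "Gamma n \<epsilon> r (iota \<epsilon> x) = iota \<epsilon> ` Dset (nat \<lfloor>sqrt (real n) / \<epsilon>\<rfloor>) (Kf \<epsilon> r) x"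
proof -
  have d: "eucl_dist (iota \<epsilon> x) (iota \<epsilon> y) \<le> r \<longleftrightarrow> Kf \<epsilon> r (real (fst x) - real (fst y)) (real (snd x) - real (snd y))" for y
    unfolding eucl_dist_def iota_def Kf_def by (simp add: left_diff_distrib)
  show ?thesis
  proof (intro set_eqI iffI)
    fix z assume "z \<in> Gamma n \<epsilon> r (iota \<epsilon> x)"
    then obtain y where y: "y \<in> {0..nat \<lfloor>sqrt (real n) / \<epsilon>\<rfloor>} \<times> {0..nat \<lfloor>sqrt (real n) / \<epsilon>\<rfloor>}" "z = iota \<epsilon> y"
       "eucl_dist (iota \<epsilon> x) z \<le> r"
      unfolding Gamma_def lattice_eq[OF e] by auto
    then have "y \<in> Dset (nat \<lfloor>sqrt (real n) / \<epsilon>\<rfloor>) (Kf \<epsilon> r) x" using d[of y] unfolding Dset_def by auto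
    then show "z \<in> iota \<epsilon> ` Dset (nat \<lfloor>sqrt (real n) / \<epsilon>\<rfloor>) (Kf \<epsilon> r) x" using y by auto
  next
    fix z assume "z \<in> iota \<epsilon> ` Dset (nat \<lfloor>sqrt (real n) / \<epsilon>\<rfloor>) (Kf \<epsilon> r) x"
    then obtain y where y: "y \<in> Dset (nat \<lfloor>sqrt (real n) / \<epsilon>\<rfloor>) (Kf \<epsilon> r) x" "z = iota \<epsilon> y" by auto
    then have "y \<in> {0..nat \<lfloor>sqrt (real n) / \<epsilon>\<rfloor>} \<times> {0..nat \<lfloor>sqrt (real n) / \<epsilon>\<rfloor>}"
      "Kf \<epsilon> r (real (fst x) - real (fst y)) (real (snd x) - real (snd y))" unfolding Dset_def by auto
    then show "z \<in> Gamma n \<epsilon> r (iota \<epsilon> x)" using d[of y] y unfolding Gamma_def lattice_eq[OF e] by auto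
  qed
qed

lemma card_Gamma:
  assumes e: "\<epsilon> > 0" and x: "x \<in> {0..nat \<lfloor>sqrt (real n) / \<epsilon>\<rfloor>} \<times> {0..nat \<lfloor>sqrt (real n) / \<epsilon>\<rfloor>}"
  shows "card (Gamma n \<epsilon> r (iota \<epsilon> x)) = card (Dset (nat \<lfloor>sqrt (real n) / \<epsilon>\<rfloor>) (Kf \<epsilon> r) x)"
  unfolding Gamma_eq[OF assms] by (rule card_image[OF iota_inj[OF e]])

lemma Gamma_ratio:
  assumes e: "\<epsilon> > 0" and z: "z \<in> lattice n \<epsilon>" and z': "z' \<in> lattice n \<epsilon>"
  shows "card (Gamma n \<epsilon> r z') \<le> 16 * card (Gamma n \<epsilon> r z)"
proof -
  obtain x where x: "x \<in> {0..nat \<lfloor>sqrt (real n) / \<epsilon>\<rfloor>} \<times> {0..nat \<lfloor>sqrt (real n) / \<epsilon>\<rfloor>}" "z = iota \<epsilon> x"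
    using z unfolding lattice_eq[OF e] by auto
  obtain y where y: "y \<in> {0..nat \<lfloor>sqrt (real n) / \<epsilon>\<rfloor>} \<times> {0..nat \<lfloor>sqrt (real n) / \<epsilon>\<rfloor>}" "z' = iota \<epsilon> y"
    using z' unfolding lattice_eq[OF e] by auto
  show ?thesis using Dset_ratio[OF dclosed_Kf, of x _ y \<epsilon> r] x y card_Gamma[OF e x(1)] card_Gamma[OF e y(1)]
    by (auto simp: mem_Times_iff)
qed

lemma Gamma_pos:
  assumes e: "\<epsilon> > 0" and z: "z \<in> lattice n \<epsilon>" and r: "r \<ge> 0"
  shows "card (Gamma n \<epsilon> r z) \<ge> 1"
proof -
  have "z \<in> Gamma n \<epsilon> r z" using z r unfolding Gamma_def eucl_dist_def by auto
  moreover have "finite (Gamma n \<epsilon> r z)" unfolding Gamma_def using finite_lattice[OF e] by auto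
  ultimately show ?thesis by (metis One_nat_def Suc_leI card_gt_0_iff empty_iff)
qed


lemma card_fibers_sum:
  assumes "finite A" "finite B" "\<And>a. a \<in> A \<Longrightarrow> f a \<in> B"
  shows "card A = (\<Sum>b\<in>B. card {a\<in>A. f a = b})"
proof -
  have "A = (\<Union>b\<in>B. {a\<in>A. f a = b})" using assms(3) by auto
  then have "card A = card (\<Union>b\<in>B. {a\<in>A. f a = b})" by simp
  also have "\<dots> = (\<Sum>b\<in>B. card {a\<in>A. f a = b})"
    by (rule card_UN_disjoint) (use assms in auto)
  finally show ?thesis .
qed

lemma sum_fibers_le:
  assumes "finite A" "finite T" "\<And>b. b \<in> T \<Longrightarrow> {a\<in>A. f a = b} \<subseteq> N" "finite N"
  shows "(\<Sum>b\<in>T. card {a\<in>A. f a = b}) \<le> card N"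
proof -
  have "(\<Sum>b\<in>T. card {a\<in>A. f a = b}) = card (\<Union>b\<in>T. {a\<in>A. f a = b})"
    by (rule card_UN_disjoint[symmetric]) (use assms in auto)
  also have "\<dots> \<le> card N" using assms by (intro card_mono) auto
  finally show ?thesis .
qed

locale cellgraph =
  fixes n U :: nat and c :: "nat \<Rightarrow> nat \<times> nat" and adj :: "nat \<Rightarrow> nat \<Rightarrow> bool" and m M :: real
  assumes cG: "\<And>i. i < n \<Longrightarrow> c i \<in> {0..<U} \<times> {0..<U}"
    and adjc: "\<And>i j. i < n \<Longrightarrow> j < n \<Longrightarrow> i \<noteq> j \<Longrightarrow> c i = c j \<or> adj4 (c i) (c j) \<Longrightarrow> adj i j"
    and cntlo: "\<And>g. g \<in> {0..<U} \<times> {0..<U} \<Longrightarrow> m \<le> real (card {i\<in>{0..<n}. c i = g})"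
    and cnthi: "\<And>g. g \<in> {0..<U} \<times> {0..<U} \<Longrightarrow> real (card {i\<in>{0..<n}. c i = g}) \<le> M"
    and mpos: "m > 0"
begin

abbreviation "G \<equiv> {0..<U} \<times> {0..<U}"

lemma E1:
  assumes I: "I \<subseteq> {0..<n}" and i0: "i0 \<in> I"
  shows "real (card (nbhd n adj I)) \<ge> m - real (card I)"
proof -
  have i0n: "i0 < n" using I i0 by auto
  let ?S = "{j\<in>{0..<n}. c j = c i0}"
  have "?S - I \<subseteq> nbhd n adj I"
    unfolding nbhd_def using i0 i0n by (auto intro!: bexI[of _ i0] adjc)
  then have "card (?S - I) \<le> card (nbhd n adj I)"
    by (intro card_mono) (auto simp: nbhd_def)
  moreover have "card ?S - card I \<le> card (?S - I)" by (rule diff_card_le_card_Diff) (use I finite_subset in auto)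
  moreover have "m \<le> real (card ?S)" using cntlo cG i0n by auto
  ultimately show ?thesis by linarith
qed

lemma E2:
  assumes I: "I \<subseteq> {0..<n}" and half: "2 * card I \<le> n"
  shows "6 * real (card (nbhd n adj I)) \<ge> real (card I) \<or>
         32 * M * real (card (nbhd n adj I))^2 \<ge> m^2 * real (card I)"
proof -
  let ?N = "nbhd n adj I"
  define k where "k = card I"
  define X where "X g = card {i\<in>{0..<n}. c i = g}" for g
  define Y where "Y g = card {i\<in>I. c i = g}" for g
  define Z where "Z g = card {i\<in>{0..<n} - I. c i = g}" for g
  have finI: "finite I" using I finite_subset by auto
  have finN: "finite ?N" unfolding nbhd_def by auto
  have finG: "finite G" by auto
  have XYZ: "X g = Y g + Z g" for g
  proof -
    have "{i\<in>{0..<n}. c i = g} = {i\<in>I. c i = g} \<union> {i\<in>{0..<n} - I. c i = g}" using I by auto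
    moreover have "card ({i\<in>I. c i = g} \<union> {i\<in>{0..<n} - I. c i = g}) = card {i\<in>I. c i = g} + card {i\<in>{0..<n} - I. c i = g}"
      by (rule card_Un_disjoint) (use finI in auto)
    ultimately show ?thesis unfolding X_def Y_def Z_def by simp
  qed
  have sumY: "(\<Sum>g\<in>G. Y g) = k" unfolding Y_def k_def
    by (rule card_fibers_sum[symmetric]) (use finI I cG in auto)
  have sumX: "(\<Sum>g\<in>G. X g) = n" unfolding X_def
    using card_fibers_sum[of "{0..<n}" G c] cG by auto
  define H where "H = {g\<in>G. 4 * Y g \<ge> 3 * X g}"
  define Lt where "Lt = {g\<in>G. 4 * Y g < 3 * X g \<and> Y g > 0}"
  have finH: "finite H" "finite Lt" unfolding H_def Lt_def by auto
  have LtN: "(\<Sum>g\<in>Lt. Z g) \<le> card ?N"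
    unfolding Z_def
  proof (rule sum_fibers_le)
    fix g assume g: "g \<in> Lt"
    then have "Y g > 0" unfolding Lt_def by auto
    then obtain i where i: "i \<in> I" "c i = g" unfolding Y_def by (metis (mono_tags, lifting) card.empty empty_Collect_eq less_irrefl)
    show "{a \<in> {0..<n} - I. c a = g} \<subseteq> ?N"
      unfolding nbhd_def using i I by (auto intro!: bexI[of _ i] adjc)
  qed (use finH finN in auto)
  have YZ_light: "Y g \<le> 3 * Z g" if "g \<in> Lt" for g using that XYZ[of g] unfolding Lt_def by auto
  have sumLtY: "(\<Sum>g\<in>Lt. Y g) \<le> 3 * card ?N"
  proof -
    have "(\<Sum>g\<in>Lt. Y g) \<le> (\<Sum>g\<in>Lt. 3 * Z g)" using YZ_light by (intro sum_mono) auto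
    also have "\<dots> = 3 * (\<Sum>g\<in>Lt. Z g)" by (simp add: sum_distrib_left)
    finally show ?thesis using LtN by linarith
  qed
  have splitY: "k \<le> (\<Sum>g\<in>Lt. Y g) + (\<Sum>g\<in>H. Y g)"
  proof -
    have "(\<Sum>g\<in>G. Y g) = (\<Sum>g\<in>Lt \<union> H. Y g) + (\<Sum>g\<in>G - (Lt \<union> H). Y g)"
      by (subst sum.union_disjoint[symmetric]) (auto simp: H_def Lt_def intro: sum.cong)
    moreover have "(\<Sum>g\<in>G - (Lt \<union> H). Y g) = 0"
      by (rule sum.neutral) (auto simp: H_def Lt_def)
    moreover have "(\<Sum>g\<in>Lt \<union> H. Y g) = (\<Sum>g\<in>Lt. Y g) + (\<Sum>g\<in>H. Y g)"
      by (rule sum.union_disjoint) (auto simp: H_def Lt_def)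
    ultimately show ?thesis using sumY by linarith
  qed
  show ?thesis
  proof (cases "2 * (\<Sum>g\<in>Lt. Y g) \<ge> k")
    case True
    then show ?thesis using sumLtY unfolding k_def by linarith
  next
    case False
    then have YH: "k < 2 * (\<Sum>g\<in>H. Y g)" using splitY by linarith
    have YleM: "real (Y g) \<le> M" if "g \<in> G" for g
    proof -
      have "Y g \<le> X g" using XYZ[of g] by simp
      then show ?thesis using cnthi[OF that] unfolding X_def by linarith
    qed
    have Hbig: "real k \<le> 2 * M * real (card H)"
    proof -
      have "real (\<Sum>g\<in>H. Y g) \<le> (\<Sum>g\<in>H. M)"
        unfolding of_nat_sum by (intro sum_mono) (use YleM in \<open>auto simp: H_def\<close>)
      moreover have "real k < 2 * real (\<Sum>g\<in>H. Y g)" using YH by linarith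
      ultimately show ?thesis by (simp add: algebra_simps)
    qed
    have Mpos: "M > 0"
    proof -
      have "(0::nat,0::nat) \<in> G \<or> G = {}" by auto
      moreover have "H \<noteq> {}" proof
        assume "H = {}" then show False using YH by simp
      qed
      then have "G \<noteq> {}" by (auto simp: H_def)
      ultimately show ?thesis using cntlo[of "(0,0)"] cnthi[of "(0,0)"] mpos by auto
    qed
    have Ccomp: "real k \<le> 2 * M * real (card (G - H))"
    proof -
      have "(\<Sum>g\<in>H. 3 * X g) \<le> (\<Sum>g\<in>H. 4 * Y g)" by (intro sum_mono) (auto simp: H_def)
      also have "\<dots> = 4 * (\<Sum>g\<in>H. Y g)" by (simp add: sum_distrib_left)
      also have "(\<Sum>g\<in>H. Y g) \<le> (\<Sum>g\<in>G. Y g)" by (intro sum_mono2) (auto simp: H_def)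
      finally have HX: "3 * (\<Sum>g\<in>H. X g) \<le> 4 * k" using sumY by (simp add: sum_distrib_left)
      have HG: "H \<subseteq> G" by (auto simp: H_def)
      have "sum X G = sum X (G - H) + sum X H" by (rule sum.subset_diff[OF HG finG])
      then have "n = (\<Sum>g\<in>H. X g) + (\<Sum>g\<in>G - H. X g)" using sumX by simp
      moreover have "real (\<Sum>g\<in>G - H. X g) \<le> (\<Sum>g\<in>G - H. M)"
        unfolding of_nat_sum X_def by (intro sum_mono) (use cnthi in auto)
      ultimately have A: "n = sum X H + sum X (G - H)" "real (sum X (G - H)) \<le> real (card (G - H)) * M"
        by (simp_all add: of_nat_sum)
      have "real (3 * sum X H) \<le> real (4 * k)" using HX by linarith
      moreover have "real (2 * k) \<le> real n" using half unfolding k_def by linarith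
      ultimately show ?thesis using A by (simp add: algebra_simps)
    qed
    have iso: "min (card H) (card (G - H)) \<le> (card (bdry U H))^2"
      by (rule grid_iso) (auto simp: H_def)
    have kb: "real k \<le> 2 * M * real ((card (bdry U H))^2)"
    proof -
      have "real (min (card H) (card (G - H))) \<le> real ((card (bdry U H))^2)" using iso by linarith
      then have "2 * M * real (min (card H) (card (G - H))) \<le> 2 * M * real ((card (bdry U H))^2)"
        using Mpos by (intro mult_left_mono) auto
      moreover have "real k \<le> 2 * M * real (min (card H) (card (G - H)))"
        using Hbig Ccomp by (cases "card H \<le> card (G - H)") (auto simp: min_def)
      ultimately show ?thesis by linarith
    qed
    have bdG: "bdry U H \<subseteq> G - H" unfolding bdry_def by auto
    have bdN: "(\<Sum>g\<in>bdry U H. Z g) \<le> card ?N"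
      unfolding Z_def
    proof (rule sum_fibers_le)
      fix d assume d: "d \<in> bdry U H"
      then obtain g where g: "g \<in> H" "adj4 g d" unfolding bdry_def by auto
      have gG: "g \<in> G" using g by (auto simp: H_def)
      have "Y g > 0"
      proof -
        have "m \<le> real (X g)" using cntlo[OF gG] unfolding X_def by simp
        then have "X g > 0" using mpos by (cases "X g") auto
        then show ?thesis using g(1) unfolding H_def by auto
      qed
      then obtain i where i: "i \<in> I" "c i = g" unfolding Y_def by (metis (mono_tags, lifting) card.empty empty_Collect_eq less_irrefl)
      show "{a \<in> {0..<n} - I. c a = d} \<subseteq> ?N"
        unfolding nbhd_def using i I g(2) by (auto intro!: bexI[of _ i] adjc)
    next
      show "finite (bdry U H)" using bdG finite_subset by blast
    qed (use finN in auto)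
    have Zbd: "m / 4 \<le> real (Z g)" if "g \<in> bdry U H" for g
    proof -
      have gG: "g \<in> G" "g \<notin> H" using that bdG by auto
      then have "4 * Y g < 3 * X g" unfolding H_def by auto
      then have "X g < 4 * Z g" using XYZ[of g] by linarith
      moreover have "m \<le> real (X g)" using cntlo[OF gG(1)] unfolding X_def by simp
      ultimately show ?thesis by linarith
    qed
    have "(m / 4) * real (card (bdry U H)) \<le> real (card ?N)"
    proof -
      have "(m / 4) * real (card (bdry U H)) = (\<Sum>g\<in>bdry U H. m / 4)" by simp
      also have "\<dots> \<le> (\<Sum>g\<in>bdry U H. real (Z g))" using Zbd by (intro sum_mono) auto
      also have "\<dots> \<le> real (card ?N)" using bdN unfolding of_nat_sum[symmetric] by linarith
      finally show ?thesis .
    qed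
    then have sq: "(m / 4)^2 * real (card (bdry U H))^2 \<le> real (card ?N)^2"
      using mpos by (metis power_mono power_mult_distrib zero_le_divide_iff less_imp_le of_nat_0_le_iff mult_nonneg_nonneg zero_le_numeral)
    have "m^2 * real k \<le> m^2 * (2 * M * real (card (bdry U H))^2)"
      using kb by (intro mult_left_mono) auto
    also have "\<dots> = 32 * M * ((m / 4)^2 * real (card (bdry U H))^2)" by (simp add: power_divide field_simps)
    also have "\<dots> \<le> 32 * M * real (card ?N)^2" using sq Mpos by (intro mult_left_mono) auto
    finally show ?thesis unfolding k_def by simp
  qed
qed

end


lemma prop1_arith:
  fixes R h k Nn :: real
  assumes "h \<ge> 1" "h \<le> R^2 / 51200" "k \<le> h" "k \<ge> 0" "k > 0 \<Longrightarrow> Nn \<ge> R^2/25600 - k" "Nn \<ge> 0"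
  shows "Nn \<ge> (1/51200) * R^2 / h * k"
proof (cases "k > 0")
  case False
  then have "k = 0" using assms by auto
  then show ?thesis using assms by simp
next
  case True
  have "(1/51200) * R^2 / h * k \<le> (1/51200) * R^2"
  proof -
    have "k / h \<le> 1" using assms by simp
    moreover have "R^2 \<ge> 0" by simp
    ultimately have "R^2 * (k / h) \<le> R^2 * 1" by (intro mult_left_mono) auto
    then show ?thesis by (simp add: field_simps)
  qed
  also have "\<dots> \<le> Nn" using assms True by simp
  finally show ?thesis .
qed

lemma prop2_arith:
  fixes R h k Nn :: real
  assumes R: "R > 0" and h: "h \<ge> R^2 / 51200" "k \<le> h" "k \<ge> 0"
    and E1: "k > 0 \<Longrightarrow> Nn \<ge> R^2/25600 - k"
    and E2: "k > R^2/51200 \<Longrightarrow> 6 * Nn \<ge> k \<or> 32 * (9 * R^2) * Nn^2 \<ge> (R^2/25600)^2 * k"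
    and Nn: "Nn \<ge> 0"
  shows "Nn \<ge> (1/10^9) * R / sqrt h * k"
proof (cases "k > 0")
  case False
  then have "k = 0" using h by auto
  then show ?thesis using Nn by simp
next
  case True
  have hpos: "h > 0" using True h by linarith
  define q where "q = (1/10^9) * R / sqrt h * k"
  have q0: "q \<ge> 0" unfolding q_def using R h by simp
  have "q^2 = (1/10^18) * R^2 * (k * (k / h))" unfolding q_def using hpos
    by (simp add: power_divide power_mult_distrib field_simps power2_eq_square)
  also have "\<dots> \<le> (1/10^18) * R^2 * (k * 1)"
    using h hpos True by (intro mult_left_mono) (auto simp: field_simps)
  finally have q2: "q^2 \<le> (1/10^18) * R^2 * k" by simp
  have "q^2 \<le> Nn^2"
  proof (cases "k \<le> R^2/51200")
    case True
    have "Nn \<ge> R^2/51200" using E1 \<open>k > 0\<close> True by linarith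
    then have "Nn^2 \<ge> (R^2/51200)^2" by (intro power_mono) auto
    moreover have "(1/10^18) * R^2 * k \<le> (R^2/51200)^2"
    proof -
      have "(1/10^18) * R^2 * k \<le> (1/10^18) * R^2 * (R^2/51200)"
        using True by (intro mult_left_mono) auto
      also have "\<dots> \<le> (R^2/51200)^2" using R by (simp add: power2_eq_square field_simps)
      finally show ?thesis .
    qed
    ultimately show ?thesis using q2 by linarith
  next
    case False
    then have kb: "k > R^2/51200" by simp
    from E2[OF kb] show ?thesis
    proof
      assume "6 * Nn \<ge> k"
      then have "Nn^2 \<ge> (k/6)^2" using True by (intro power_mono) auto
      moreover have "(1/10^18) * R^2 * k \<le> (k/6)^2"
      proof -
        have "(1/10^18) * R^2 \<le> k / 36" using kb True by (simp add: field_simps; linarith)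
        then have "(1/10^18) * R^2 * k \<le> k / 36 * k" using True by (intro mult_right_mono) auto
        then show ?thesis by (simp add: power2_eq_square)
      qed
      ultimately show ?thesis using q2 by linarith
    next
      assume a: "32 * (9 * R^2) * Nn^2 \<ge> (R^2/25600)^2 * k"
      define x where "x = R^2"
      have x0: "x > 0" unfolding x_def using R by simp
      have a': "32 * (9 * x) * Nn^2 \<ge> (x/25600)^2 * k" using a unfolding x_def .
      have eq: "(x/25600)^2 * k = x * (x * k / 655360000)" by (simp add: power2_eq_square)
      have eq2: "32 * (9 * x) * Nn^2 = x * (288 * Nn^2)" by simp
      have "x * (288 * Nn^2) \<ge> x * (x * k / 655360000)" using a' unfolding eq eq2 .
      then have "288 * Nn^2 \<ge> x * k / 655360000" using x0 by (simp add: mult_le_cancel_left)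
      then have "Nn^2 \<ge> R^2 * k / 188743680000" unfolding x_def by simp
      moreover have "(1/10^18) * R^2 * k \<le> R^2 * k / 188743680000" using True by simp
      ultimately show ?thesis using q2 by linarith
    qed
  qed
  then have "q \<le> Nn" using q0 Nn by (simp add: power_mono_iff abs_le_square_iff)
  then show ?thesis unfolding q_def .
qed


locale megsetup =
  fixes n :: nat and \<epsilon> r R :: real
  assumes e0: "\<epsilon> > 0" and e1: "\<epsilon> \<le> 1" and r0: "r \<ge> 0" and R10: "R \<ge> 10" and Rn: "R \<le> sqrt (real n)"
begin

definition "NN = nat \<lfloor>sqrt (real n) / \<epsilon>\<rfloor>"
definition "bb = nat \<lfloor>R / (5 * \<epsilon>)\<rfloor>"
definition "UU = (NN + 1) div bb"
definition "kap i = min (i div bb) (UU - 1)"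
definition "cellof z = (kap (nat \<lfloor>fst z / \<epsilon>\<rfloor>), kap (nat \<lfloor>snd z / \<epsilon>\<rfloor>))"

abbreviation "Lat \<equiv> lattice n \<epsilon>"
abbreviation "w \<equiv> stat_pi n \<epsilon> r"

lemma sn_ge: "sqrt (real n) / \<epsilon> \<ge> 10"
proof -
  have s0: "sqrt (real n) \<ge> 0" by simp
  have "\<epsilon> * sqrt (real n) \<le> 1 * sqrt (real n)" using mult_right_mono[OF e1 s0] .
  then have "sqrt (real n) / \<epsilon> \<ge> sqrt (real n)" using e0 by (simp add: field_simps)
  then show ?thesis using R10 Rn by linarith
qed

lemma NN_bounds: "real NN \<le> sqrt (real n) / \<epsilon>" "sqrt (real n) / \<epsilon> < real NN + 1"
proof -
  have a: "sqrt (real n) / \<epsilon> \<ge> 0" using sn_ge by linarith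
  show "real NN \<le> sqrt (real n) / \<epsilon>" unfolding NN_def using a by linarith
  show "sqrt (real n) / \<epsilon> < real NN + 1" unfolding NN_def using a by linarith
qed

lemma NN1: "real NN + 1 \<le> 2 * sqrt (real n) / \<epsilon>"
  using NN_bounds sn_ge by linarith

lemma bb_bounds: "bb \<ge> 1" "real bb * \<epsilon> \<le> R / 5" "real bb * \<epsilon> \<ge> R / 10"
proof -
  have a: "R / (5 * \<epsilon>) \<ge> 2" using R10 e0 e1 by (simp add: field_simps)
  have b1: "real bb \<le> R / (5 * \<epsilon>)" "R / (5 * \<epsilon>) < real bb + 1" unfolding bb_def using a by linarith+
  then show "bb \<ge> 1" using a by linarith
  show "real bb * \<epsilon> \<le> R / 5" using b1(1) e0 by (simp add: field_simps)
  have "R / (10 * \<epsilon>) \<ge> 1" using R10 e0 e1 by (simp add: field_simps)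
  then have "real bb \<ge> R / (10 * \<epsilon>)" using b1(2) by (simp add: field_simps)
  then show "real bb * \<epsilon> \<ge> R / 10" using e0 by (simp add: field_simps)
qed

lemma bb_le: "bb \<le> NN + 1"
proof -
  have "real bb * \<epsilon> \<le> R" using bb_bounds by linarith
  then have "real bb \<le> R / \<epsilon>" using e0 by (simp add: field_simps)
  also have "\<dots> \<le> sqrt (real n) / \<epsilon>" using Rn e0 by (simp add: divide_right_mono)
  finally show ?thesis using NN_bounds by linarith
qed

lemma UU_pos: "UU \<ge> 1"
  unfolding UU_def using bb_le bb_bounds(1) div_greater_zero_iff[of "NN+1" bb] by simp

lemma kap_bounds:
  assumes "i \<le> NN"
  shows "kap i < UU" "kap i * bb \<le> i" "i < (kap i + 2) * bb"
proof -
  have b: "bb > 0" using bb_bounds by simp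
  have d1: "(i div bb) * bb \<le> i" by simp
  have d2: "i < (i div bb + 1) * bb" using dividend_less_div_times[OF b, of i] by simp
  have NU: "NN + 1 < (UU + 1) * bb" unfolding UU_def using dividend_less_div_times[OF b, of "NN+1"] by simp
  show "kap i < UU" unfolding kap_def using UU_pos by simp
  show "kap i * bb \<le> i"
  proof (cases "i div bb \<le> UU - 1")
    case True then show ?thesis using d1 unfolding kap_def by simp
  next
    case False
    then have "(UU - 1) * bb \<le> (i div bb) * bb" by simp
    moreover have "kap i = UU - 1" using False unfolding kap_def by simp
    ultimately show ?thesis using d1 by (metis order_trans)
  qed
  show "i < (kap i + 2) * bb"
  proof (cases "i div bb \<le> UU - 1")
    case True then show ?thesis using d2 unfolding kap_def by (simp add: algebra_simps)
  next
    case False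
    then have "kap i = UU - 1" unfolding kap_def by simp
    then have "kap i + 2 = UU + 1" using UU_pos by simp
    then show ?thesis using NU assms by simp
  qed
qed

lemma cellof_iota: "cellof (iota \<epsilon> (i, j)) = (kap i, kap j)"
  unfolding cellof_def iota_def using e0 by simp

lemma lat_eq: "Lat = iota \<epsilon> ` ({0..NN} \<times> {0..NN})"
  unfolding NN_def by (rule lattice_eq[OF e0])

lemma finLat: "finite Lat" by (rule finite_lattice[OF e0])

lemma cellof_G: "z \<in> Lat \<Longrightarrow> cellof z \<in> {0..<UU} \<times> {0..<UU}"
  unfolding lat_eq using kap_bounds(1) by (auto simp: cellof_iota)

end


context megsetup begin

definition "gg z = real (card (Gamma n \<epsilon> r z))"
definition "SS = (\<Sum>y\<in>Lat. gg y)"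
definition "LL = real (card Lat)"

lemma w_eq: "w z = gg z / SS" unfolding stat_pi_def gg_def SS_def by simp

lemma gg_pos: "z \<in> Lat \<Longrightarrow> gg z \<ge> 1"
  unfolding gg_def using Gamma_pos[OF e0 _ r0] by simp

lemma gg_ratio: "z \<in> Lat \<Longrightarrow> y \<in> Lat \<Longrightarrow> gg y \<le> 16 * gg z"
proof -
  assume z: "z \<in> Lat" and y: "y \<in> Lat"
  have "card (Gamma n \<epsilon> r y) \<le> 16 * card (Gamma n \<epsilon> r z)" by (rule Gamma_ratio[OF e0 z y])
  then have "real (card (Gamma n \<epsilon> r y)) \<le> real (16 * card (Gamma n \<epsilon> r z))" by (simp only: of_nat_le_iff)
  then show ?thesis unfolding gg_def by simp
qed

lemma LL_eq: "LL = (real NN + 1)^2"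
  unfolding LL_def NN_def card_lattice[OF e0] by simp

lemma LL_pos: "LL > 0" unfolding LL_eq by simp

lemma S_upper: "z \<in> Lat \<Longrightarrow> SS \<le> 16 * LL * gg z"
proof -
  assume z: "z \<in> Lat"
  have "SS \<le> (\<Sum>y\<in>Lat. 16 * gg z)" unfolding SS_def using gg_ratio[OF z] by (intro sum_mono) auto
  then show ?thesis unfolding LL_def by (simp add: algebra_simps)
qed

lemma S_lower: "z \<in> Lat \<Longrightarrow> LL * gg z \<le> 16 * SS"
proof -
  assume z: "z \<in> Lat"
  have "(\<Sum>y\<in>Lat. gg z) \<le> (\<Sum>y\<in>Lat. 16 * gg y)" using gg_ratio[OF _ z] by (intro sum_mono) auto
  then show ?thesis unfolding LL_def SS_def by (simp add: algebra_simps sum_distrib_left)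
qed

lemma SS_pos: "SS > 0"
proof -
  have "iota \<epsilon> (0,0) \<in> Lat" unfolding lat_eq by auto
  then have "LL * 1 \<le> LL * gg (iota \<epsilon> (0,0))" using gg_pos LL_pos by (intro mult_left_mono) auto
  also have "\<dots> \<le> 16 * SS" using S_lower \<open>iota \<epsilon> (0,0) \<in> Lat\<close> by blast
  finally have "LL * 1 \<le> 16 * SS" .
  then show ?thesis using LL_pos by simp
qed

lemma w_nonneg: "w z \<ge> 0" unfolding w_eq gg_def using SS_pos by simp

lemma w_sum: "sum w Lat = 1"
  unfolding w_eq using SS_pos by (simp add: sum_divide_distrib[symmetric] SS_def)

lemma w_low: "z \<in> Lat \<Longrightarrow> w z \<ge> 1 / (16 * LL)"
proof -
  assume z: "z \<in> Lat"
  have "SS \<le> 16 * LL * gg z" by (rule S_upper[OF z])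
  then show ?thesis unfolding w_eq using SS_pos LL_pos gg_pos[OF z] by (simp add: field_simps)
qed

lemma w_high: "z \<in> Lat \<Longrightarrow> w z \<le> 16 / LL"
proof -
  assume z: "z \<in> Lat"
  have "LL * gg z \<le> 16 * SS" by (rule S_lower[OF z])
  then show ?thesis unfolding w_eq using SS_pos LL_pos gg_pos[OF z] by (simp add: field_simps)
qed

definition "WW u = {i\<in>{0..NN}. kap i = u}"

lemma WW_card: assumes "u < UU" shows "bb \<le> card (WW u)" "card (WW u) \<le> 2 * bb"
proof -
  have b: "bb > 0" using bb_bounds by simp
  have "{u*bb..<u*bb+bb} \<subseteq> WW u"
  proof
    fix i assume i: "i \<in> {u*bb..<u*bb+bb}"
    have "i div bb = u" using i b by (simp add: div_nat_eqI algebra_simps)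
    moreover have "(u + 1) * bb \<le> UU * bb" using assms by (intro mult_le_mono1) simp
    then have "u * bb + bb \<le> UU * bb" by (simp add: algebra_simps)
    moreover have "UU * bb \<le> NN + 1" unfolding UU_def by simp
    ultimately show "i \<in> WW u" using i assms unfolding WW_def kap_def by auto
  qed
  moreover have "finite (WW u)" unfolding WW_def by auto
  ultimately have "card {u*bb..<u*bb+bb} \<le> card (WW u)" by (intro card_mono)
  then show "bb \<le> card (WW u)" by simp
  have "WW u \<subseteq> {u*bb..<(u+2)*bb}"
  proof
    fix i assume "i \<in> WW u"
    then have "i \<le> NN" "kap i = u" unfolding WW_def by auto
    then show "i \<in> {u*bb..<(u+2)*bb}" using kap_bounds(2,3)[of i] by auto
  qed
  then have "card (WW u) \<le> card {u*bb..<(u+2)*bb}" by (intro card_mono) auto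
  then show "card (WW u) \<le> 2 * bb" by (simp add: algebra_simps)
qed

lemma cell_eq: "{z\<in>Lat. cellof z = (u,v)} = iota \<epsilon> ` (WW u \<times> WW v)"
proof (intro set_eqI iffI)
  fix z assume "z \<in> {z\<in>Lat. cellof z = (u,v)}"
  then obtain i j where "i \<le> NN" "j \<le> NN" "z = iota \<epsilon> (i,j)" "cellof z = (u,v)" unfolding lat_eq by auto
  then show "z \<in> iota \<epsilon> ` (WW u \<times> WW v)" unfolding WW_def by (auto simp: cellof_iota)
next
  fix z assume "z \<in> iota \<epsilon> ` (WW u \<times> WW v)"
  then obtain i j where "i \<in> WW u" "j \<in> WW v" "z = iota \<epsilon> (i,j)" by auto
  then show "z \<in> {z\<in>Lat. cellof z = (u,v)}" unfolding WW_def lat_eq by (auto simp: cellof_iota)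
qed

lemma cell_card: "card {z\<in>Lat. cellof z = (u,v)} = card (WW u) * card (WW v)"
  unfolding cell_eq by (subst card_image) (auto simp: iota_inj[OF e0] card_cartesian_product)

end


context megsetup begin

definition "pcell g = sum w {z\<in>Lat. cellof z = g}"

lemma qbounds: "sqrt (real n) < (real NN + 1) * \<epsilon>" "(real NN + 1) * \<epsilon> \<le> 2 * sqrt (real n)"
  using NN_bounds(2) NN1 e0 by (simp_all add: field_simps)

lemma nLL: "real n / LL \<ge> \<epsilon>^2 / 4" "real n / LL \<le> \<epsilon>^2"
proof -
  define q where "q = real NN + 1"
  have q0: "q > 0" unfolding q_def by simp
  have s2: "(sqrt (real n))^2 = real n" by simp
  have "(q * \<epsilon>)^2 \<le> (2 * sqrt (real n))^2" using qbounds(2) q0 e0 unfolding q_def by (intro power_mono) auto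
  then have a: "q^2 * \<epsilon>^2 \<le> 4 * real n" by (simp add: power_mult_distrib)
  have "(sqrt (real n))^2 \<le> (q * \<epsilon>)^2" using qbounds(1) unfolding q_def by (intro power_mono) auto
  then have b: "real n \<le> q^2 * \<epsilon>^2" by (simp add: power_mult_distrib)
  have LLq: "LL = q^2" unfolding LL_eq q_def ..
  show "real n / LL \<ge> \<epsilon>^2 / 4" unfolding LLq using a q0 by (simp add: field_simps)
  show "real n / LL \<le> \<epsilon>^2" unfolding LLq using b q0 by (simp add: field_simps)
qed

lemma p_bounds:
  assumes g: "g \<in> {0..<UU} \<times> {0..<UU}"
  shows "R^2 / 6400 \<le> real n * pcell g" "real n * pcell g \<le> 3 * R^2"
proof -
  obtain u v where uv: "g = (u,v)" "u < UU" "v < UU" using g by auto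
  define C where "C = {z\<in>Lat. cellof z = g}"
  have cC: "card C = card (WW u) * card (WW v)" unfolding C_def uv(1) by (rule cell_card)
  have c1: "real bb ^ 2 \<le> real (card C)"
  proof -
    have "bb * bb \<le> card (WW u) * card (WW v)" using WW_card(1)[OF uv(2)] WW_card(1)[OF uv(3)] by (rule mult_le_mono)
    then show ?thesis unfolding cC power2_eq_square by (simp only: of_nat_mult[symmetric] of_nat_le_iff)
  qed
  have c2: "real (card C) \<le> 4 * real bb ^ 2"
  proof -
    have "card (WW u) * card (WW v) \<le> (2*bb) * (2*bb)" using WW_card(2)[OF uv(2)] WW_card(2)[OF uv(3)] by (rule mult_le_mono)
    then have "real (card C) \<le> real ((2*bb) * (2*bb))" unfolding cC by (simp only: of_nat_le_iff)
    then show ?thesis by (simp add: power2_eq_square)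
  qed
  have CL: "C \<subseteq> Lat" unfolding C_def by auto
  have finC: "finite C" using finLat CL finite_subset by auto
  have plo: "pcell g \<ge> real (card C) / (16 * LL)"
  proof -
    have "(\<Sum>z\<in>C. 1 / (16 * LL)) \<le> (\<Sum>z\<in>C. w z)" using w_low CL by (intro sum_mono) auto
    then show ?thesis unfolding pcell_def C_def[symmetric] by simp
  qed
  have phi: "pcell g \<le> 16 * real (card C) / LL"
  proof -
    have "(\<Sum>z\<in>C. w z) \<le> (\<Sum>z\<in>C. 16 / LL)" using w_high CL by (intro sum_mono) auto
    then show ?thesis unfolding pcell_def C_def[symmetric] by (simp add: field_simps)
  qed
  have n0: "real n \<ge> 0" by simp
  have "(\<epsilon>^2 / 4) * (real bb ^ 2) / 16 \<le> (real n / LL) * real (card C) / 16"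
    using nLL(1) c1 e0 LL_pos by (intro divide_right_mono mult_mono) auto
  also have "\<dots> = real n * (real (card C) / (16 * LL))" by simp
  also have "\<dots> \<le> real n * pcell g" using plo n0 by (rule mult_left_mono)
  finally have A: "(real bb * \<epsilon>)^2 / 64 \<le> real n * pcell g" by (simp add: power_mult_distrib mult.commute)
  have "(R / 10)^2 \<le> (real bb * \<epsilon>)^2" using bb_bounds(3) R10 by (intro power_mono) auto
  then show "R^2 / 6400 \<le> real n * pcell g" using A by (simp add: power_divide)
  have "real n * pcell g \<le> real n * (16 * real (card C) / LL)" using phi n0 by (rule mult_left_mono)
  also have "\<dots> = 16 * (real n / LL) * real (card C)" by simp
  also have "\<dots> \<le> 16 * \<epsilon>^2 * (4 * real bb ^ 2)"
    using nLL(2) c2 LL_pos by (intro mult_mono) auto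
  finally have B: "real n * pcell g \<le> 64 * (real bb * \<epsilon>)^2" by (simp add: power_mult_distrib mult.commute)
  have "(real bb * \<epsilon>)^2 \<le> (R / 5)^2" using bb_bounds(2) e0 by (intro power_mono) auto
  then show "real n * pcell g \<le> 3 * R^2" using B zero_le_power2[of R] by (simp add: power_divide; linarith)
qed

lemma near_dist:
  assumes z: "z \<in> Lat" and z': "z' \<in> Lat"
    and u: "fst (cellof z) \<le> fst (cellof z') + 1" "fst (cellof z') \<le> fst (cellof z) + 1"
    and v: "snd (cellof z) \<le> snd (cellof z') + 1" "snd (cellof z') \<le> snd (cellof z) + 1"
  shows "eucl_dist z z' \<le> R"
proof -
  obtain i j where ij: "i \<le> NN" "j \<le> NN" "z = iota \<epsilon> (i,j)" using z unfolding lat_eq by auto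
  obtain i' j' where ij': "i' \<le> NN" "j' \<le> NN" "z' = iota \<epsilon> (i',j')" using z' unfolding lat_eq by auto
  have cz: "cellof z = (kap i, kap j)" "cellof z' = (kap i', kap j')" using ij ij' by (simp_all add: cellof_iota)
  have close: "\<bar>real a - real a'\<bar> \<le> 3 * real bb" if "a \<le> NN" "a' \<le> NN" "kap a \<le> kap a' + 1" "kap a' \<le> kap a + 1" for a a'
  proof -
    have "a < (kap a + 2) * bb" "kap a' * bb \<le> a'" "a' < (kap a' + 2) * bb" "kap a * bb \<le> a"
      using kap_bounds that by auto
    moreover have m1: "kap a * bb \<le> (kap a' + 1) * bb" "kap a' * bb \<le> (kap a + 1) * bb"
      using that by (intro mult_le_mono1, simp)+
    then have "(kap a + 2) * bb \<le> kap a' * bb + 3 * bb" "(kap a' + 2) * bb \<le> kap a * bb + 3 * bb"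
      by (simp_all add: algebra_simps)
    ultimately have "a < a' + 3 * bb" "a' < a + 3 * bb" by linarith+
    then show ?thesis by linarith
  qed
  have dx: "\<bar>real i - real i'\<bar> \<le> 3 * real bb" using close[of i i'] ij ij' u cz by simp
  have dy: "\<bar>real j - real j'\<bar> \<le> 3 * real bb" using close[of j j'] ij ij' v cz by simp
  have bR: "3 * real bb * \<epsilon> \<le> 3 * R / 5" using bb_bounds(2) by (simp add: algebra_simps)
  have ex: "((real i - real i') * \<epsilon>)^2 \<le> (3 * R / 5)^2"
  proof -
    have "\<bar>(real i - real i') * \<epsilon>\<bar> \<le> 3 * real bb * \<epsilon>" using dx e0 by (simp add: abs_mult mult_right_mono)
    then have "\<bar>(real i - real i') * \<epsilon>\<bar> \<le> 3 * R / 5" using bR by (rule order_trans)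
    then have "\<bar>(real i - real i') * \<epsilon>\<bar> \<le> \<bar>3 * R / 5\<bar>" using R10 by simp
    then show ?thesis by (rule abs_le_square_iff[THEN iffD1])
  qed
  have ey: "((real j - real j') * \<epsilon>)^2 \<le> (3 * R / 5)^2"
  proof -
    have "\<bar>(real j - real j') * \<epsilon>\<bar> \<le> 3 * real bb * \<epsilon>" using dy e0 by (simp add: abs_mult mult_right_mono)
    then have "\<bar>(real j - real j') * \<epsilon>\<bar> \<le> 3 * R / 5" using bR by (rule order_trans)
    then have "\<bar>(real j - real j') * \<epsilon>\<bar> \<le> \<bar>3 * R / 5\<bar>" using R10 by simp
    then show ?thesis by (rule abs_le_square_iff[THEN iffD1])
  qed
  have sq: "((real i - real i') * \<epsilon>)^2 + ((real j - real j') * \<epsilon>)^2 \<le> R^2"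
    using ex ey zero_le_power2[of R] by (simp add: power_divide power_mult_distrib; linarith)
  then have "sqrt (((real i - real i') * \<epsilon>)^2 + ((real j - real j') * \<epsilon>)^2) \<le> R"
    using real_sqrt_le_mono[OF sq] R10 by simp
  then show ?thesis unfolding ij(3) ij'(3) eucl_dist_def iota_def by (simp add: left_diff_distrib)
qed

lemma UU_sq: "real (UU^2) \<le> 4 * real n"
proof -
  have "UU * bb \<le> NN + 1" unfolding UU_def by simp
  then have "real UU * (real bb * \<epsilon>) \<le> (real NN + 1) * \<epsilon>" using e0
    by (metis mult.assoc of_nat_1 of_nat_add of_nat_le_iff of_nat_mult mult_right_mono less_imp_le)
  also have "\<dots> \<le> 2 * sqrt (real n)" by (rule qbounds(2))
  finally have a: "real UU * (real bb * \<epsilon>) \<le> 2 * sqrt (real n)" .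
  have "real UU * 1 \<le> real UU * (real bb * \<epsilon>)" using bb_bounds(3) R10 by (intro mult_left_mono) auto
  then have "real UU \<le> 2 * sqrt (real n)" using a by simp
  then have "real UU ^ 2 \<le> (2 * sqrt (real n))^2" by (intro power_mono) auto
  then show ?thesis by (simp add: power_mult_distrib)
qed

end


lemma sum_exists_le:
  fixes f :: "'a \<Rightarrow> real"
  assumes "finite A" "finite K" "\<And>x. x \<in> A \<Longrightarrow> f x \<ge> 0"
  shows "(\<Sum>x\<in>{x\<in>A. \<exists>g\<in>K. B g x}. f x) \<le> (\<Sum>g\<in>K. \<Sum>x\<in>{x\<in>A. B g x}. f x)"
  using assms(2)
proof (induction K rule: finite_induct)
  case empty then show ?case by simp
next
  case (insert g K)
  have eq: "{x\<in>A. \<exists>g'\<in>insert g K. B g' x} = {x\<in>A. B g x} \<union> {x\<in>A. \<exists>g'\<in>K. B g' x}" by auto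
  have "(\<Sum>x\<in>{x\<in>A. B g x} \<union> {x\<in>A. \<exists>g'\<in>K. B g' x}. f x)
        \<le> (\<Sum>x\<in>{x\<in>A. B g x}. f x) + (\<Sum>x\<in>{x\<in>A. \<exists>g'\<in>K. B g' x}. f x)"
  proof -
    have "(\<Sum>x\<in>{x\<in>A. B g x} \<union> {x\<in>A. \<exists>g'\<in>K. B g' x}. f x) =
          (\<Sum>x\<in>{x\<in>A. B g x}. f x) + (\<Sum>x\<in>{x\<in>A. \<exists>g'\<in>K. B g' x}. f x)
          - (\<Sum>x\<in>{x\<in>A. B g x} \<inter> {x\<in>A. \<exists>g'\<in>K. B g' x}. f x)"
      using assms(1) by (subst sum_Un) auto
    moreover have "(\<Sum>x\<in>{x\<in>A. B g x} \<inter> {x\<in>A. \<exists>g'\<in>K. B g' x}. f x) \<ge> 0"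
      using assms(3) by (intro sum_nonneg) auto
    ultimately show ?thesis by linarith
  qed
  moreover have s1: "(\<Sum>x\<in>{x\<in>A. \<exists>g'\<in>insert g K. B g' x}. f x) = (\<Sum>x\<in>{x\<in>A. B g x} \<union> {x\<in>A. \<exists>g'\<in>K. B g' x}. f x)"
    by (simp only: eq)
  moreover have s2: "(\<Sum>g'\<in>insert g K. \<Sum>x\<in>{x\<in>A. B g' x}. f x) = (\<Sum>x\<in>{x\<in>A. B g x}. f x) + (\<Sum>g'\<in>K. \<Sum>x\<in>{x\<in>A. B g' x}. f x)"
    by (rule sum.insert[OF insert.hyps])
  ultimately show ?case using insert.IH by linarith
qed

context megsetup begin

definition "Good P \<longleftrightarrow> (\<forall>g\<in>{0..<UU} \<times> {0..<UU}.
    R^2/25600 \<le> real (card {i\<in>{0..<n}. P i \<in> {z. cellof z = g}}) \<and>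
    real (card {i\<in>{0..<n}. P i \<in> {z. cellof z = g}}) \<le> 9 * R^2)"

abbreviation "PS \<equiv> PiE {0..<n} (\<lambda>_. Lat)"

lemma total_one: "(\<Sum>P\<in>PS. \<Prod>i\<in>{0..<n}. w (P i)) = 1"
  using PiE_prod_power[OF finLat, of w n] w_sum by simp

lemma wP_nonneg: "(\<Prod>i\<in>{0..<n}. w (P i)) \<ge> 0"
  using w_nonneg by (intro prod_nonneg) auto

lemma finPS: "finite PS" using finLat by (simp add: finite_PiE)

lemma bad_prob:
  "(\<Sum>P\<in>{P\<in>PS. \<not> Good P}. \<Prod>i\<in>{0..<n}. w (P i)) \<le> 8 * real n * exp (- (R^2) / 25600)"
proof -
  let ?G = "{0..<UU} \<times> {0..<UU}"
  let ?X = "\<lambda>g P. real (card {i\<in>{0..<n}. P i \<in> {z. cellof z = g}})"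
  let ?f = "\<lambda>P. \<Prod>i\<in>{0..<n}. w (P i)"
  let ?B = "\<lambda>g P. ?X g P \<le> real n * pcell g / 4 \<or> ?X g P \<ge> 3 * (real n * pcell g)"
  have sub: "{P\<in>PS. \<not> Good P} \<subseteq> {P\<in>PS. \<exists>g\<in>?G. ?B g P}"
  proof clarify
    fix P assume "P \<in> PS" "\<not> Good P"
    then obtain g where g: "g \<in> ?G" "?X g P < R^2/25600 \<or> ?X g P > 9 * R^2" unfolding Good_def by auto
    have "?B g P" using g(2) p_bounds[OF g(1)] by auto
    then show "\<exists>g\<in>?G. ?B g P" using g(1) by blast
  qed
  have "(\<Sum>P\<in>{P\<in>PS. \<not> Good P}. ?f P) \<le> (\<Sum>P\<in>{P\<in>PS. \<exists>g\<in>?G. ?B g P}. ?f P)"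
    using sub finPS wP_nonneg by (intro sum_mono2) auto
  also have "\<dots> \<le> (\<Sum>g\<in>?G. \<Sum>P\<in>{P\<in>PS. ?B g P}. ?f P)"
    using finPS wP_nonneg by (intro sum_exists_le) auto
  also have "\<dots> \<le> (\<Sum>g\<in>?G. 2 * exp (- (R^2) / 25600))"
  proof (intro sum_mono)
    fix g assume g: "g \<in> ?G"
    have pdef: "pcell g = sum w {x\<in>Lat. x \<in> {z. cellof z = g}}" unfolding pcell_def by simp
    have lo: "(\<Sum>P\<in>{P\<in>PS. ?X g P \<le> real n * pcell g / 4}. ?f P) \<le> exp (real n * pcell g / 4 - real n * pcell g / 2)"
      by (rule chernoff_low[OF finLat _ w_sum pdef]) (use w_nonneg in auto)
    have hi: "(\<Sum>P\<in>{P\<in>PS. ?X g P \<ge> 3 * (real n * pcell g)}. ?f P) \<le> exp (2 * real n * pcell g - 3 * (real n * pcell g))"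
      by (rule chernoff_high[OF finLat _ w_sum pdef]) (use w_nonneg in auto)
    have e1: "exp (real n * pcell g / 4 - real n * pcell g / 2) \<le> exp (- (R^2) / 25600)"
      using p_bounds(1)[OF g] by simp
    have e2: "exp (2 * real n * pcell g - 3 * (real n * pcell g)) \<le> exp (- (R^2) / 25600)"
      using p_bounds(1)[OF g] zero_le_power2[of R] by (simp; linarith)
    have "(\<Sum>P\<in>{P\<in>PS. ?B g P}. ?f P) \<le> (\<Sum>P\<in>{P\<in>PS. ?X g P \<le> real n * pcell g / 4} \<union> {P\<in>PS. ?X g P \<ge> 3 * (real n * pcell g)}. ?f P)"
      using finPS wP_nonneg by (intro sum_mono2) auto
    also have "\<dots> \<le> (\<Sum>P\<in>{P\<in>PS. ?X g P \<le> real n * pcell g / 4}. ?f P) + (\<Sum>P\<in>{P\<in>PS. ?X g P \<ge> 3 * (real n * pcell g)}. ?f P)"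
    proof -
      have "(\<Sum>P\<in>{P\<in>PS. ?X g P \<le> real n * pcell g / 4} \<inter> {P\<in>PS. ?X g P \<ge> 3 * (real n * pcell g)}. ?f P) \<ge> 0"
        using wP_nonneg by (intro sum_nonneg) auto
      then show ?thesis using finPS by (subst sum_Un) auto
    qed
    finally show "(\<Sum>P\<in>{P\<in>PS. ?B g P}. ?f P) \<le> 2 * exp (- (R^2) / 25600)" using lo hi e1 e2 by linarith
  qed
  also have "\<dots> = real (UU^2) * (2 * exp (- (R^2) / 25600))" by (simp add: power2_eq_square)
  also have "\<dots> \<le> (4 * real n) * (2 * exp (- (R^2) / 25600))" using UU_sq by (intro mult_right_mono) auto
  finally show ?thesis by simp
qed

lemma good_prob:
  "(\<Sum>P\<in>{P\<in>PS. Good P}. \<Prod>i\<in>{0..<n}. w (P i)) \<ge> 1 - 8 * real n * exp (- (R^2) / 25600)"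
proof -
  have "(\<Sum>P\<in>PS. \<Prod>i\<in>{0..<n}. w (P i)) = (\<Sum>P\<in>{P\<in>PS. Good P}. \<Prod>i\<in>{0..<n}. w (P i)) + (\<Sum>P\<in>{P\<in>PS. \<not> Good P}. \<Prod>i\<in>{0..<n}. w (P i))"
    using finPS by (subst sum.union_disjoint[symmetric]) (auto intro: sum.cong)
  then show ?thesis using total_one bad_prob by linarith
qed

end


context megsetup begin

lemma good_Q:
  assumes P: "P \<in> PS" and G: "Good P"
  shows "(\<forall>h::nat. 1 \<le> h \<and> real h \<le> (1/51200) * R^2 \<longrightarrow>
                       is_expander n (meg_adj R P) h ((1/51200) * R^2 / real h)) \<and>
         (\<forall>h::nat. (1/51200) * R^2 \<le> real h \<and> real h \<le> real n / 2 \<longrightarrow>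
                       is_expander n (meg_adj R P) h ((1/10^9) * R / sqrt (real h)))"
proof -
  have PL: "i < n \<Longrightarrow> P i \<in> Lat" for i using P by (auto simp: PiE_def Pi_def)
  interpret cg: cellgraph n UU "\<lambda>i. cellof (P i)" "meg_adj R P" "R^2/25600" "9*R^2"
  proof
    fix i assume "i < n" then show "cellof (P i) \<in> {0..<UU} \<times> {0..<UU}" using cellof_G PL by blast
  next
    fix i j assume ij: "i < n" "j < n" "i \<noteq> j" "cellof (P i) = cellof (P j) \<or> adj4 (cellof (P i)) (cellof (P j))"
    have "eucl_dist (P i) (P j) \<le> R"
      by (rule near_dist[OF PL[OF ij(1)] PL[OF ij(2)]]) (use ij(4) in \<open>auto simp: adj4_def\<close>)
    then show "meg_adj R P i j" unfolding meg_adj_def using ij by auto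
  next
    fix g assume g: "g \<in> {0..<UU} \<times> {0..<UU}"
    have eq: "{i\<in>{0..<n}. cellof (P i) = g} = {i\<in>{0..<n}. P i \<in> {z. cellof z = g}}" by simp
    show "R^2/25600 \<le> real (card {i\<in>{0..<n}. cellof (P i) = g})"
      using G g unfolding Good_def eq by blast
    show "real (card {i\<in>{0..<n}. cellof (P i) = g}) \<le> 9 * R^2"
      using G g unfolding Good_def eq by blast
  next
    show "R^2/25600 > 0" using R10 by simp
  qed
  have E1': "real (card I) > 0 \<Longrightarrow> real (card (nbhd n (meg_adj R P) I)) \<ge> R^2/25600 - real (card I)"
    if I: "I \<subseteq> {0..<n}" for I
  proof -
    assume "real (card I) > 0"
    then have "I \<noteq> {}" by auto
    then obtain i0 where "i0 \<in> I" by auto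
    then show ?thesis using cg.E1[OF I] by blast
  qed
  show ?thesis
  proof (intro conjI allI impI)
    fix h :: nat assume h: "1 \<le> h \<and> real h \<le> (1/51200) * R^2"
    show "is_expander n (meg_adj R P) h ((1/51200) * R^2 / real h)"
      unfolding is_expander_def
    proof (intro allI impI)
      fix I assume I: "I \<subseteq> {0..<n}" "card I \<le> h"
      show "(1/51200) * R^2 / real h * real (card I) \<le> real (card (nbhd n (meg_adj R P) I))"
        by (rule prop1_arith) (use h I E1'[OF I(1)] in auto)
    qed
  next
    fix h :: nat assume h: "(1/51200) * R^2 \<le> real h \<and> real h \<le> real n / 2"
    show "is_expander n (meg_adj R P) h ((1/10^9) * R / sqrt (real h))"
      unfolding is_expander_def
    proof (intro allI impI)
      fix I assume I: "I \<subseteq> {0..<n}" "card I \<le> h"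
      have half: "2 * card I \<le> n" using I(2) h by linarith
      show "(1/10^9) * R / sqrt (real h) * real (card I) \<le> real (card (nbhd n (meg_adj R P) I))"
        by (rule prop2_arith) (use h I E1'[OF I(1)] cg.E2[OF I(1) half] R10 in auto)
    qed
  qed
qed

end

theorem mainTheorem7:
  "\<exists>c \<alpha> \<beta> :: real. c > 0 \<and> \<alpha> > 0 \<and> \<beta> > 0 \<and>
    (\<exists>n0::nat. \<forall>n \<ge> n0. \<forall>r \<epsilon> R :: real.
       r \<ge> 0 \<and> 0 < \<epsilon> \<and> \<epsilon> \<le> 1 \<and> \<epsilon> < R \<and>
       c * sqrt (ln (real n)) \<le> R \<and> R \<le> sqrt (real n) \<longrightarrow>
       stationary_prob n r R \<epsilon>
         (\<lambda>adj. (\<forall>h::nat. 1 \<le> h \<and> real h \<le> \<alpha> * R^2 \<longrightarrow>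
                       is_expander n adj h (\<alpha> * R^2 / real h)) \<and>
                (\<forall>h::nat. \<alpha> * R^2 \<le> real h \<and> real h \<le> real n / 2 \<longrightarrow>
                       is_expander n adj h (\<beta> * R / sqrt (real h))))
       \<ge> 1 - 1 / (real n)^2)"
proof (intro exI conjI)
  show "(320::real) > 0" "(1/51200::real) > 0" "(1/10^9::real) > 0" by simp_all
  show "\<forall>n \<ge> 8. \<forall>r \<epsilon> R :: real.
       r \<ge> 0 \<and> 0 < \<epsilon> \<and> \<epsilon> \<le> 1 \<and> \<epsilon> < R \<and>
       320 * sqrt (ln (real n)) \<le> R \<and> R \<le> sqrt (real n) \<longrightarrow>
       stationary_prob n r R \<epsilon>
         (\<lambda>adj. (\<forall>h::nat. 1 \<le> h \<and> real h \<le> (1/51200) * R^2 \<longrightarrow>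
                       is_expander n adj h ((1/51200) * R^2 / real h)) \<and>
                (\<forall>h::nat. (1/51200) * R^2 \<le> real h \<and> real h \<le> real n / 2 \<longrightarrow>
                       is_expander n adj h ((1/10^9) * R / sqrt (real h))))
       \<ge> 1 - 1 / (real n)^2"
  proof (intro allI impI)
    fix n :: nat and r \<epsilon> R :: real
    assume n8: "n \<ge> 8"
    assume A: "r \<ge> 0 \<and> 0 < \<epsilon> \<and> \<epsilon> \<le> 1 \<and> \<epsilon> < R \<and> 320 * sqrt (ln (real n)) \<le> R \<and> R \<le> sqrt (real n)"
    have npos: "real n > 0" using n8 by simp
    have ln1: "ln (real n) \<ge> 1"
    proof -
      have "exp 1 \<le> (3::real)" using exp_le by simp
      then have "exp 1 \<le> real n" using n8 by linarith
      then show ?thesis using npos by (simp add: ln_ge_iff)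
    qed
    have sq1: "sqrt (ln (real n)) \<ge> 1" using ln1 by simp
    have R10: "R \<ge> 10" using A sq1 by linarith
    interpret ms: megsetup n \<epsilon> r R using A R10 by unfold_locales auto
    let ?Q = "\<lambda>adj. (\<forall>h::nat. 1 \<le> h \<and> real h \<le> (1/51200) * R^2 \<longrightarrow>
                       is_expander n adj h ((1/51200) * R^2 / real h)) \<and>
                (\<forall>h::nat. (1/51200) * R^2 \<le> real h \<and> real h \<le> real n / 2 \<longrightarrow>
                       is_expander n adj h ((1/10^9) * R / sqrt (real h)))"
    have "(\<Sum>P\<in>{P\<in>ms.PS. ms.Good P}. \<Prod>i\<in>{0..<n}. ms.w (P i))
          \<le> (\<Sum>P\<in>{P\<in>ms.PS. ?Q (meg_adj R P)}. \<Prod>i\<in>{0..<n}. ms.w (P i))"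
      using ms.finPS ms.wP_nonneg ms.good_Q by (intro sum_mono2) auto
    also have "\<dots> = stationary_prob n r R \<epsilon> ?Q" unfolding stationary_prob_def by simp
    finally have S1: "1 - 8 * real n * exp (- (R^2) / 25600) \<le> stationary_prob n r R \<epsilon> ?Q"
      using ms.good_prob by linarith
    have "R^2 \<ge> (320 * sqrt (ln (real n)))^2"
      using A sq1 by (intro power_mono) auto
    then have R2: "R^2 \<ge> 102400 * ln (real n)" using ln1 by (simp add: power_mult_distrib)
    have "exp (- (R^2) / 25600) \<le> exp (- (4 * ln (real n)))" using R2 by simp
    also have "exp (- (4 * ln (real n))) = 1 / real n ^ 4"
    proof -
      have "exp (real 4 * ln (real n)) = exp (ln (real n)) ^ 4" by (rule exp_of_nat_mult)
      then have "exp (4 * ln (real n)) = real n ^ 4" using npos by simp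
      then show ?thesis by (simp add: exp_minus field_simps)
    qed
    finally have e4: "exp (- (R^2) / 25600) \<le> 1 / real n ^ 4" .
    have "8 * real n * exp (- (R^2) / 25600) \<le> 8 * real n * (1 / real n ^ 4)"
      using e4 npos by (intro mult_left_mono) auto
    also have "\<dots> = 8 / real n ^ 3" using npos by (simp add: field_simps power_eq_if)
    also have "\<dots> \<le> 1 / real n ^ 2"
    proof -
      have "8 * real n ^ 2 \<le> real n * real n ^ 2" using n8 by (intro mult_right_mono) auto
      then show ?thesis using npos by (simp add: field_simps power_eq_if)
    qed
    finally show "1 - 1 / (real n)^2 \<le> stationary_prob n r R \<epsilon> ?Q" using S1 by linarith
  qed
qed


end
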